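(* Let $d\geq1$, $M\in\mathbb{N}_{\geq2}$, $p\in(1/M,1]$, let $F$ be the fractal percolation in $[0,1]^d$ with parameters $M,p$, $D=\log(M^dp)/\log M$, $r=1/M$, and let $C_n$ and $C_n^j$ be as in the context. Then for each $k\in\{0,\ldots,d\}$ with $k<D$ the limit $$\overline{\mathcal V}^c_k(F):=\lim_{n\to\infty} r^{n(D-k)}\mathbb{E}V_k(C_n)$$ exists and equals $$q_{d,k}\frac{M^{d-k}(1-p)}{M^{d-k}p-1}+\sum_{T\subset\{1,\ldots,M^d\},\,|T|\geq2}(-1)^{|T|-1}\sum_{n=1}^\infty r^{n(D-k)}\mathbb{E}V_k\Big(\bigcap_{j\in T}C_n^j\Big),$$ where $q_{d,k}=V_k([0,1]^d)$ and all series converge.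
   Context: Fractal percolation: $J=[0,1]^d$, $F_0:=J$; given $F_{n-1}$, a union of closed grid cubes of side $M^{-(n-1)}$, each such cube is divided into $M^d$ closed subcubes of side $M^{-n}$, each kept independently (of everything else) with probability $p$; $F_n$ is the union of kept subcubes. $J_1,\ldots,J_{M^d}$ are the closed subcubes of side $1/M$ of $J$. $C_n:=\overline{J\setminus F_n}$ (closure), which is the union of all level-$n$ grid cubes (side $M^{-n}$) not belonging to $F_n$; $C_n^j$ is the union of those level-$n$ grid cubes contained in $J_j$ that do not belong to $F_n$. $V_k$ denote intrinsic volumes, additively extended to finite unions of compact convex sets, $V_k(\emptyset)=0$. *)

theory Defs
  imports "HOL-Probability.Probability"
begin

text \<open>Intrinsic volume V_k of a (possibly degenerate) nonempty axis-parallel box: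
  the k-th elementary symmetric polynomial of its side lengths; V_k of the empty set is 0.\<close>
definition box_V :: "nat \<Rightarrow> (real^'n) set \<Rightarrow> real" where
  "box_V k X = (if X = {} then 0 else
     (\<Sum>S\<in>{S::'n set. card S = k}.
        \<Prod>j\<in>S. (Sup ((\<lambda>x. x$j) ` X) - Inf ((\<lambda>x. x$j) ` X))))"

definition is_box :: "(real^'n) set \<Rightarrow> bool" where
  "is_box X \<longleftrightarrow> (\<exists>a b. a \<le> b \<and> X = cbox a b)"

definition intrinsic_volume :: "nat \<Rightarrow> (real^'n) set \<Rightarrow> real" where
  "intrinsic_volume k A = (SOME v. \<exists>B. finite B \<and> (\<forall>X\<in>B. is_box X) \<and> A = \<Union>B \<and>
      v = (\<Sum>S\<in>{S. S \<subseteq> B \<and> S \<noteq> {}}. (-1) ^ (card S + 1) * box_V k (\<Inter>S)))"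

definition grid_cube :: "nat \<Rightarrow> nat \<Rightarrow> ('n \<Rightarrow> nat) \<Rightarrow> (real^'n) set" where
  "grid_cube M n i = cbox (\<chi> j. real (i j) / real M ^ n) (\<chi> j. real (i j + 1) / real M ^ n)"

definition grid_idx :: "nat \<Rightarrow> nat \<Rightarrow> ('n \<Rightarrow> nat) set" where
  "grid_idx M n = {i. \<forall>j. i j < M ^ n}"

text \<open>kept M X n i: the level-n cube i belongs to F_n, where X n i is the coin
  of level-n cube i (n \<ge> 1); the unique level-0 cube J is always kept.\<close>
fun kept :: "nat \<Rightarrow> (nat \<Rightarrow> ('n \<Rightarrow> nat) \<Rightarrow> bool) \<Rightarrow> nat \<Rightarrow> ('n \<Rightarrow> nat) \<Rightarrow> bool" where
  "kept M X 0 i = True"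
| "kept M X (Suc n) i = (kept M X n (\<lambda>j. i j div M) \<and> X (Suc n) i)"

definition Cset :: "nat \<Rightarrow> (nat \<Rightarrow> ('n \<Rightarrow> nat) \<Rightarrow> bool) \<Rightarrow> nat \<Rightarrow> (real^'n) set" where
  "Cset M X n = \<Union>{grid_cube M n i | i. i \<in> grid_idx M n \<and> \<not> kept M X n i}"

definition Cset_sub :: "nat \<Rightarrow> (nat \<Rightarrow> ('n \<Rightarrow> nat) \<Rightarrow> bool) \<Rightarrow> nat \<Rightarrow> ('n \<Rightarrow> nat) \<Rightarrow> (real^'n) set" where
  "Cset_sub M X n jj = \<Union>{grid_cube M n i | i. i \<in> grid_idx M n \<and>
       grid_cube M n i \<subseteq> grid_cube M 1 jj \<and> \<not> kept M X n i}"

end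

theory Submission
  imports Defs
begin

definition cells1 :: "real set \<Rightarrow> (real \<times> real) set" where
  "cells1 g = {(u,v). u \<in> g \<and> v \<in> g \<and> u \<le> v \<and> (\<forall>w\<in>g. \<not> (u < w \<and> w < v))}"

definition mid1 :: "real \<times> real \<Rightarrow> real" where
  "mid1 c = (fst c + snd c) / 2"

definition inab :: "real \<Rightarrow> real \<Rightarrow> real set \<Rightarrow> (real \<times> real) set" where
  "inab a b g = {c \<in> cells1 g. a \<le> fst c \<and> snd c \<le> b}"

lemma finite_cells1: "finite g \<Longrightarrow> finite (cells1 g)"
  by (rule finite_subset[of _ "g \<times> g"]) (auto simp: cells1_def)

lemma finite_inab: "finite g \<Longrightarrow> finite (inab a b g)"
  unfolding inab_def using finite_cells1 by auto

lemma mid1_iff: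
  assumes c: "c \<in> cells1 g" and a: "a \<in> g" and b: "b \<in> g"
  shows "(a \<le> mid1 c \<and> mid1 c \<le> b) \<longleftrightarrow> (a \<le> fst c \<and> snd c \<le> b)"
proof -
  obtain u v where uv: "c = (u,v)" by (cases c)
  have u: "u \<in> g" "v \<in> g" "u \<le> v" and nb: "\<And>w. w \<in> g \<Longrightarrow> \<not> (u < w \<and> w < v)"
    using c uv by (auto simp: cells1_def)
  have "a \<le> (u+v)/2 \<longleftrightarrow> a \<le> u" using nb[OF a] u by (cases "u < v") auto
  moreover have "(u+v)/2 \<le> b \<longleftrightarrow> v \<le> b" using nb[OF b] u by (cases "u < v") auto
  ultimately show ?thesis by (simp add: uv mid1_def)
qed

lemma inab_step:
  assumes g: "finite g" and a: "a \<in> g" and b: "b \<in> g" and ab: "a < b"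
  defines "b' \<equiv> Max {w \<in> g. a \<le> w \<and> w < b}"
  shows "b' \<in> g" "a \<le> b'" "b' < b"
    "inab a b g = insert (b',b) (insert (b,b) (inab a b' g))"
    "(b',b) \<notin> inab a b' g" "(b,b) \<notin> inab a b' g" "(b',b) \<noteq> (b,b)"
    "{w \<in> g. a < w \<and> w \<le> b'} \<subset> {w \<in> g. a < w \<and> w \<le> b}"
proof -
  have fin: "finite {w \<in> g. a \<le> w \<and> w < b}" using g by auto
  have ne: "{w \<in> g. a \<le> w \<and> w < b} \<noteq> {}" using a ab by auto
  have bm: "b' \<in> {w \<in> g. a \<le> w \<and> w < b}" unfolding b'_def using Max_in[OF fin ne] .
  have bmax: "\<And>w. w \<in> g \<Longrightarrow> a \<le> w \<Longrightarrow> w < b \<Longrightarrow> w \<le> b'"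
    unfolding b'_def using fin by (auto intro: Max_ge)
  show b1: "b' \<in> g" "a \<le> b'" "b' < b" using bm by auto
  show "(b',b) \<noteq> (b,b)" using b1 by auto
  show "(b',b) \<notin> inab a b' g" "(b,b) \<notin> inab a b' g" using b1 by (auto simp: inab_def)
  show "{w \<in> g. a < w \<and> w \<le> b'} \<subset> {w \<in> g. a < w \<and> w \<le> b}"
  proof -
    have "b \<in> {w \<in> g. a < w \<and> w \<le> b}" using b ab by simp
    moreover have "b \<notin> {w \<in> g. a < w \<and> w \<le> b'}" using b1(3) by simp
    moreover have "{w \<in> g. a < w \<and> w \<le> b'} \<subseteq> {w \<in> g. a < w \<and> w \<le> b}" using b1(3) by auto
    ultimately show ?thesis by blast
  qed
  show "inab a b g = insert (b',b) (insert (b,b) (inab a b' g))"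
  proof (intro set_eqI iffI)
    fix c assume c: "c \<in> inab a b g"
    obtain u v where uv: "c = (u,v)" by (cases c)
    have cu: "u \<in> g" "v \<in> g" "u \<le> v" "a \<le> u" "v \<le> b" and nb: "\<And>w. w \<in> g \<Longrightarrow> \<not> (u < w \<and> w < v)"
      using c uv by (auto simp: inab_def cells1_def)
    show "c \<in> insert (b',b) (insert (b,b) (inab a b' g))"
    proof (cases "v \<le> b'")
      case True then show ?thesis using c uv by (auto simp: inab_def)
    next
      case False
      have "v = b" using bmax[OF cu(2)] cu False by force
      moreover have "u = b' \<or> u = b"
      proof -
        have "u \<ge> b'" using nb[OF b1(1)] False \<open>v = b\<close> by auto
        moreover have "u < b \<Longrightarrow> u \<le> b'" using bmax[OF cu(1)] cu by auto
        ultimately show ?thesis using cu \<open>v = b\<close> by force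
      qed
      ultimately show ?thesis using uv by auto
    qed
  next
    fix c assume c: "c \<in> insert (b',b) (insert (b,b) (inab a b' g))"
    show "c \<in> inab a b g"
    proof -
      have "(b',b) \<in> cells1 g" using b1 b bmax by (force simp: cells1_def)
      moreover have "(b,b) \<in> cells1 g" using b by (auto simp: cells1_def)
      ultimately show ?thesis using c b1 by (auto simp: inab_def)
    qed
  qed
qed

lemma inab_same: "a \<in> g \<Longrightarrow> inab a a g = {(a,a)}"
  by (auto simp: inab_def cells1_def)

lemma inab_sums:
  assumes g: "finite g" and a: "a \<in> g" and b: "b \<in> g" and ab: "a \<le> b"
  shows "(\<Sum>c\<in>inab a b g. (if fst c < snd c then -1 else 1::real)) = 1 \<and>
         (\<Sum>c\<in>inab a b g. (if fst c < snd c then snd c - fst c else 0::real)) = b - a"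
  using b ab
proof (induction "card {w \<in> g. a < w \<and> w \<le> b}" arbitrary: b rule: less_induct)
  case (less b)
  show ?case
  proof (cases "a = b")
    case True then show ?thesis using inab_same[OF a] by simp
  next
    case False
    then have ab': "a < b" using less by auto
    define b' where "b' = Max {w \<in> g. a \<le> w \<and> w < b}"
    note st = inab_step[OF g a less(2) ab', folded b'_def]
    have "card {w \<in> g. a < w \<and> w \<le> b'} < card {w \<in> g. a < w \<and> w \<le> b}"
      by (rule psubset_card_mono) (use g st(8) in auto)
    from less(1)[OF this st(1) st(2)] have IH:
      "(\<Sum>c\<in>inab a b' g. (if fst c < snd c then -1 else 1::real)) = 1"
      "(\<Sum>c\<in>inab a b' g. (if fst c < snd c then snd c - fst c else 0::real)) = b' - a" by auto
    have fin: "finite (inab a b' g)" using finite_inab[OF g] .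
    have nin: "(b',b) \<notin> insert (b,b) (inab a b' g)" using st(5) st(7) by blast
    show ?thesis unfolding st(4)
      using IH st(3) by (simp add: sum.insert[OF finite_insert[THEN iffD2, OF fin] nin] sum.insert[OF fin st(6)])
  qed
qed

definition phi :: "'n set \<Rightarrow> 'n \<Rightarrow> real \<times> real \<Rightarrow> real" where
  "phi S j c = (if j \<in> S then (if fst c < snd c then snd c - fst c else 0)
                else (if fst c < snd c then -1 else 1))"

definition mu :: "nat \<Rightarrow> ('n::finite \<Rightarrow> real \<times> real) \<Rightarrow> real" where
  "mu k c = (\<Sum>S\<in>{S::'n set. card S = k}. \<Prod>j\<in>UNIV. phi S j (c j))"

definition cellsG :: "('n::finite \<Rightarrow> real set) \<Rightarrow> ('n \<Rightarrow> real \<times> real) set" where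
  "cellsG G = PiE UNIV (\<lambda>j. cells1 (G j))"

definition midv :: "('n::finite \<Rightarrow> real \<times> real) \<Rightarrow> real^'n" where
  "midv c = (\<chi> j. mid1 (c j))"

definition Lam :: "nat \<Rightarrow> ('n::finite \<Rightarrow> real set) \<Rightarrow> (real^'n) set \<Rightarrow> real" where
  "Lam k G A = (\<Sum>c\<in>cellsG G. indicator A (midv c) * mu k c)"

definition gbox :: "('n::finite \<Rightarrow> real set) \<Rightarrow> (real^'n) set \<Rightarrow> bool" where
  "gbox G X \<longleftrightarrow> (\<exists>a b. a \<le> b \<and> X = cbox a b \<and> (\<forall>j. a$j \<in> G j \<and> b$j \<in> G j))"

lemma finite_cellsG: "(\<And>j. finite (G j)) \<Longrightarrow> finite (cellsG G)"
  unfolding cellsG_def by (intro finite_PiE) (auto intro: finite_cells1)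

lemma proj_cbox:
  fixes a b :: "real^'n"
  assumes "a \<le> b"
  shows "(\<lambda>x. x$j) ` cbox a b = {a$j..b$j}"
proof (intro set_eqI iffI)
  fix t assume "t \<in> (\<lambda>x. x$j) ` cbox a b"
  then show "t \<in> {a$j..b$j}" by (auto simp: mem_box_cart)
next
  fix t assume t: "t \<in> {a$j..b$j}"
  define x where "x = (\<chi> l. if l = j then t else a$l)"
  have "x \<in> cbox a b" using t assms by (auto simp: mem_box_cart x_def less_eq_vec_def)
  moreover have "x$j = t" by (simp add: x_def)
  ultimately show "t \<in> (\<lambda>x. x$j) ` cbox a b" by force
qed

lemma box_V_cbox:
  fixes a b :: "real^'n::finite"
  assumes "a \<le> b"
  shows "box_V k (cbox a b) = (\<Sum>S\<in>{S::'n set. card S = k}. \<Prod>j\<in>S. (b$j - a$j))"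
proof -
  have ne: "cbox a b \<noteq> {}" using assms by (auto simp: interval_ne_empty_cart less_eq_vec_def)
  have "a$j \<le> b$j" for j using assms by (simp add: less_eq_vec_def)
  then show ?thesis using ne by (simp add: box_V_def proj_cbox[OF assms])
qed

lemma Lam_box:
  fixes a b :: "real^'n::finite"
  assumes G: "\<And>j. finite (G j)" and ab: "a \<le> b" and ag: "\<And>j. a$j \<in> G j" and bg: "\<And>j. b$j \<in> G j"
  shows "Lam k G (cbox a b) = box_V k (cbox a b)"
proof -
  define P where "P = PiE UNIV (\<lambda>j. inab (a$j) (b$j) (G j))"
  have PC: "P \<subseteq> cellsG G" unfolding P_def cellsG_def inab_def by (auto simp: PiE_iff)
  have ind: "indicator (cbox a b) (midv c) = (if c \<in> P then 1 else (0::real))" if c: "c \<in> cellsG G" for c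
  proof -
    have cj: "c j \<in> cells1 (G j)" for j using c by (auto simp: cellsG_def PiE_iff)
    have "midv c \<in> cbox a b \<longleftrightarrow> (\<forall>j. a$j \<le> fst (c j) \<and> snd (c j) \<le> b$j)"
      unfolding mem_box_cart midv_def using mid1_iff[OF cj ag bg] by simp
    also have "\<dots> \<longleftrightarrow> c \<in> P" using c cj by (auto simp: P_def inab_def PiE_iff cellsG_def)
    finally show ?thesis by (simp add: indicator_def)
  qed
  have "Lam k G (cbox a b) = (\<Sum>c\<in>cellsG G. (if c \<in> P then mu k c else 0))"
    unfolding Lam_def by (intro sum.cong refl) (simp add: ind)
  also have "\<dots> = (\<Sum>c\<in>P. mu k c)"
  proof -
    have f: "finite (cellsG G)" using finite_cellsG[of G] G by blast
    have "(\<Sum>c\<in>cellsG G. (if c \<in> P then mu k c else 0)) = (\<Sum>c\<in>cellsG G \<inter> P. mu k c)"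
      using sum.inter_restrict[OF f, of "mu k" P] by simp
    then show ?thesis using PC by (simp add: Int_absorb1)
  qed
  also have "\<dots> = (\<Sum>S\<in>{S::'n set. card S = k}. \<Sum>c\<in>P. \<Prod>j\<in>UNIV. phi S j (c j))"
    unfolding mu_def by (rule sum.swap)
  also have "\<dots> = (\<Sum>S\<in>{S::'n set. card S = k}. \<Prod>j\<in>S. (b$j - a$j))"
  proof (intro sum.cong refl)
    fix S :: "'n set"
    have "(\<Sum>c\<in>P. \<Prod>j\<in>UNIV. phi S j (c j)) = (\<Prod>j\<in>UNIV. \<Sum>y\<in>inab (a$j) (b$j) (G j). phi S j y)"
      unfolding P_def by (rule prod_sum_PiE[symmetric]) (auto intro: finite_inab G)
    also have "\<dots> = (\<Prod>j\<in>UNIV. if j \<in> S then b$j - a$j else 1)"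
    proof (intro prod.cong refl)
      fix j
      have abj: "a$j \<le> b$j" using ab by (simp add: less_eq_vec_def)
      note sm = inab_sums[OF G ag bg abj]
      show "(\<Sum>y\<in>inab (a$j) (b$j) (G j). phi S j y) = (if j \<in> S then b$j - a$j else 1)"
        using sm by (simp add: phi_def)
    qed
    also have "\<dots> = (\<Prod>j\<in>S. (b$j - a$j))"
      by (simp add: prod.If_cases)
    finally show "(\<Sum>c\<in>P. \<Prod>j\<in>UNIV. phi S j (c j)) = (\<Prod>j\<in>S. (b$j - a$j))" .
  qed
  also have "\<dots> = box_V k (cbox a b)" using box_V_cbox[OF ab] by simp
  finally show ?thesis .
qed

lemma Lam_empty[simp]: "Lam k G {} = 0"
  by (simp add: Lam_def)

lemma Lam_Un_disj: "disjnt S T \<Longrightarrow> Lam k G (S \<union> T) = Lam k G S + Lam k G T"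
  unfolding Lam_def
  by (simp add: indicator_disj_union disjnt_def distrib_right sum.distrib)

lemma Lam_IE:
  assumes "finite J"
  shows "Lam k G (\<Union>(A ` J)) = (\<Sum>T | T \<subseteq> J \<and> T \<noteq> {}. (- 1) ^ (card T + 1) * Lam k G (\<Inter>(A ` T)))"
  by (rule Incl_Excl_UN) (use assms Lam_Un_disj in auto)

lemma gbox_cbox: "gbox G X \<Longrightarrow> \<exists>a b. a \<le> b \<and> X = cbox a b \<and> (\<forall>j. a$j \<in> G j \<and> b$j \<in> G j)"
  by (simp add: gbox_def)

lemma Int_gbox:
  assumes "gbox G X" "gbox G Y"
  shows "X \<inter> Y = {} \<or> gbox G (X \<inter> Y)"
proof -
  obtain a b where X: "a \<le> b" "X = cbox a b" "\<forall>j. a$j \<in> G j \<and> b$j \<in> G j" using assms(1) gbox_def by blast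
  obtain c d where Y: "c \<le> d" "Y = cbox c d" "\<forall>j. c$j \<in> G j \<and> d$j \<in> G j" using assms(2) gbox_def by blast
  define e where "e = (\<chi> i. max (a$i) (c$i))"
  define f where "f = (\<chi> i. min (b$i) (d$i))"
  have I: "X \<inter> Y = cbox e f" unfolding X Y e_def f_def Int_interval_cart interval_cbox_cart ..
  show ?thesis
  proof (cases "e \<le> f")
    case True
    have "\<forall>j. e$j \<in> G j \<and> f$j \<in> G j" using X(3) Y(3) by (auto simp: e_def f_def max_def min_def)
    then show ?thesis using True I by (auto simp: gbox_def)
  next
    case False
    then have "cbox e f = {}" by (auto simp: interval_eq_empty_cart less_eq_vec_def not_le)
    then show ?thesis using I by simp
  qed
qed

lemma Inter_gbox:
  assumes "finite S" "S \<noteq> {}" "\<forall>X\<in>S. gbox G X"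
  shows "\<Inter>S = {} \<or> gbox G (\<Inter>S)"
  using assms
proof (induction S rule: finite_ne_induct)
  case (singleton x) then show ?case by simp
next
  case (insert x F)
  then have "\<Inter>F = {} \<or> gbox G (\<Inter>F)" by simp
  then show ?case
  proof
    assume "\<Inter>F = {}" then show ?thesis by simp
  next
    assume "gbox G (\<Inter>F)"
    then show ?thesis using Int_gbox[of G x "\<Inter>F"] insert by simp
  qed
qed

definition ie :: "nat \<Rightarrow> (real^'n::finite) set set \<Rightarrow> real" where
  "ie k B = (\<Sum>S\<in>{S. S \<subseteq> B \<and> S \<noteq> {}}. (-1) ^ (card S + 1) * box_V k (\<Inter>S))"

lemma Lam_gbox: "(\<And>j. finite (G j)) \<Longrightarrow> gbox G X \<Longrightarrow> Lam k G X = box_V k X"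
  unfolding gbox_def using Lam_box by blast

lemma ie_Lam:
  assumes G: "\<And>j. finite (G j)" and B: "finite B" "\<forall>X\<in>B. gbox G X"
  shows "ie k B = Lam k G (\<Union>B)"
proof -
  have "Lam k G (\<Union>B) = Lam k G (\<Union>(id ` B))" by simp
  also have "\<dots> = (\<Sum>T | T \<subseteq> B \<and> T \<noteq> {}. (- 1) ^ (card T + 1) * Lam k G (\<Inter>(id ` T)))"
    by (rule Lam_IE[OF B(1)])
  also have "\<dots> = ie k B"
    unfolding ie_def
  proof (intro sum.cong refl)
    fix T assume T: "T \<in> {T. T \<subseteq> B \<and> T \<noteq> {}}"
    then have "finite T" using B(1) finite_subset by auto
    then have "\<Inter>T = {} \<or> gbox G (\<Inter>T)" using Inter_gbox[of T G] T B(2) by auto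
    then have "Lam k G (\<Inter>T) = box_V k (\<Inter>T)"
    proof
      assume "\<Inter>T = {}" then show ?thesis by (simp add: box_V_def)
    next
      assume "gbox G (\<Inter>T)" then show ?thesis using Lam_gbox[of G, OF G] by blast
    qed
    then show "(- 1) ^ (card T + 1) * Lam k G (\<Inter>(id ` T)) = (-1) ^ (card T + 1) * box_V k (\<Inter>T)"
      by simp
  qed
  finally show ?thesis by simp
qed

definition brk :: "(real^'n::finite) set set \<Rightarrow> 'n \<Rightarrow> real set" where
  "brk B j = (\<lambda>X. Inf ((\<lambda>x. x$j) ` X)) ` B \<union> (\<lambda>X. Sup ((\<lambda>x. x$j) ` X)) ` B"

lemma finite_brk: "finite B \<Longrightarrow> finite (brk B j)"
  by (simp add: brk_def)

lemma gbox_mono: "gbox G X \<Longrightarrow> (\<And>j. G j \<subseteq> G' j) \<Longrightarrow> gbox G' X"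
  unfolding gbox_def by blast

lemma is_box_gbox:
  assumes "is_box X" "X \<in> B" "\<And>j. brk B j \<subseteq> G j"
  shows "gbox G X"
proof -
  obtain a b where ab: "a \<le> b" "X = cbox a b" using assms(1) is_box_def by blast
  have "a$j \<le> b$j" for j using ab by (simp add: less_eq_vec_def)
  then have i: "Inf ((\<lambda>x. x$j) ` X) = a$j" "Sup ((\<lambda>x. x$j) ` X) = b$j" for j
    by (simp_all add: ab(2) proj_cbox[OF ab(1)])
  have "a$j \<in> brk B j \<and> b$j \<in> brk B j" for j
    unfolding brk_def using assms(2) i[of j] by (metis UnI1 UnI2 rev_image_eqI)
  then have "\<forall>j. a$j \<in> G j \<and> b$j \<in> G j" using assms(3) by blast
  then show ?thesis unfolding gbox_def using ab by blast
qed

lemma gbox_is_box: "gbox G X \<Longrightarrow> is_box X"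
  unfolding gbox_def is_box_def by blast

lemma intrinsic_volume_ie:
  assumes B: "finite B" "\<forall>X\<in>B. is_box X"
  shows "intrinsic_volume k (\<Union>B) = ie k B"
proof -
  define P where "P = (\<lambda>v. \<exists>B'. finite B' \<and> (\<forall>X\<in>B'. is_box X) \<and> \<Union>B = \<Union>B' \<and>
      v = (\<Sum>S\<in>{S. S \<subseteq> B' \<and> S \<noteq> {}}. (-1) ^ (card S + 1) * box_V k (\<Inter>S)))"
  have "P (ie k B)" unfolding P_def ie_def using B by blast
  then have "P (SOME v. P v)" by (rule someI)
  then obtain B' where B': "finite B'" "\<forall>X\<in>B'. is_box X" "\<Union>B = \<Union>B'"
    and v: "(SOME v. P v) = ie k B'" unfolding P_def ie_def by blast
  have iv: "intrinsic_volume k (\<Union>B) = (SOME v. P v)" unfolding intrinsic_volume_def P_def ..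
  define G where "G = (\<lambda>j. brk B j \<union> brk B' j)"
  have G: "\<And>j. finite (G j)" unfolding G_def using B(1) B'(1) by (simp add: finite_brk)
  have g1: "\<forall>X\<in>B. gbox G X" using B(2) is_box_gbox[of _ B G] by (auto simp: G_def)
  have g2: "\<forall>X\<in>B'. gbox G X" using B'(2) is_box_gbox[of _ B' G] by (auto simp: G_def)
  have e1: "ie k B = Lam k G (\<Union>B)" by (rule ie_Lam[OF G B(1) g1])
  have e2: "ie k B' = Lam k G (\<Union>B')" by (rule ie_Lam[OF G B'(1) g2])
  have "intrinsic_volume k (\<Union>B) = ie k B'" using iv v by simp
  also have "\<dots> = Lam k G (\<Union>B')" by (rule e2)
  also have "\<dots> = Lam k G (\<Union>B)" using B'(3) by simp
  also have "\<dots> = ie k B" using e1 by simp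
  finally show ?thesis .
qed

definition pbox :: "('n::finite \<Rightarrow> real set) \<Rightarrow> (real^'n) set \<Rightarrow> bool" where
  "pbox G A \<longleftrightarrow> (\<exists>B. finite B \<and> (\<forall>X\<in>B. gbox G X) \<and> A = \<Union>B)"

lemma V_pbox:
  assumes G: "\<And>j. finite (G j)" and A: "pbox G A"
  shows "intrinsic_volume k A = Lam k G A"
proof -
  have "\<exists>B. finite B \<and> (\<forall>X\<in>B. gbox G X) \<and> A = \<Union>B" using A by (simp only: pbox_def)
  then obtain B where B: "finite B" "\<forall>X\<in>B. gbox G X" "A = \<Union>B" by blast
  have "\<forall>X\<in>B. is_box X" using B(2) gbox_is_box by blast
  then have "intrinsic_volume k (\<Union>B) = ie k B" using intrinsic_volume_ie[OF B(1)] by blast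
  then show ?thesis using ie_Lam[OF G B(1,2)] B(3) by simp
qed

lemma pbox_empty: "pbox G {}"
  unfolding pbox_def by (rule exI[of _ "{}"]) simp

lemma pbox_gbox: "gbox G X \<Longrightarrow> pbox G X"
  unfolding pbox_def by (rule exI[of _ "{X}"]) simp

lemma pbox_Un: "pbox G A \<Longrightarrow> pbox G A' \<Longrightarrow> pbox G (A \<union> A')"
  unfolding pbox_def by (metis Union_Un_distrib Un_iff finite_UnI)

lemma pbox_UN: "finite J \<Longrightarrow> (\<And>j. j \<in> J \<Longrightarrow> pbox G (A j)) \<Longrightarrow> pbox G (\<Union>(A ` J))"
  by (induction J rule: finite_induct) (auto intro: pbox_Un pbox_empty)

lemma pbox_Int:
  assumes "pbox G A" "pbox G A'"
  shows "pbox G (A \<inter> A')"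
proof -
  have "\<exists>B. finite B \<and> (\<forall>X\<in>B. gbox G X) \<and> A = \<Union>B" using assms(1) by (simp only: pbox_def)
  then obtain B where B: "finite B" "\<forall>X\<in>B. gbox G X" "A = \<Union>B" by blast
  have "\<exists>B. finite B \<and> (\<forall>X\<in>B. gbox G X) \<and> A' = \<Union>B" using assms(2) by (simp only: pbox_def)
  then obtain B' where B': "finite B'" "\<forall>X\<in>B'. gbox G X" "A' = \<Union>B'" by blast
  define C where "C = (\<lambda>(X,Y). X \<inter> Y) ` ((B \<times> B') \<inter> {(X,Y). X \<inter> Y \<noteq> {}})"
  have "finite C" unfolding C_def using B(1) B'(1) by (intro finite_imageI) auto
  moreover have "\<forall>Z\<in>C. gbox G Z"
  proof
    fix Z assume "Z \<in> C"
    then obtain X Y where "X \<in> B" "Y \<in> B'" "X \<inter> Y \<noteq> {}" "Z = X \<inter> Y" unfolding C_def by auto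
    then show "gbox G Z" using B(2) B'(2) Int_gbox[of G X Y] by auto
  qed
  moreover have "A \<inter> A' = \<Union>C"
  proof
    show "A \<inter> A' \<subseteq> \<Union>C"
    proof
      fix x assume "x \<in> A \<inter> A'"
      then obtain X Y where XY: "X \<in> B" "Y \<in> B'" "x \<in> X" "x \<in> Y" using B(3) B'(3) by blast
      then have "X \<inter> Y \<in> C" unfolding C_def by (intro image_eqI[of _ _ "(X,Y)"]) auto
      then show "x \<in> \<Union>C" using XY by blast
    qed
    show "\<Union>C \<subseteq> A \<inter> A'" unfolding C_def B(3) B'(3) by auto
  qed
  ultimately show ?thesis unfolding pbox_def by (intro exI[of _ C]) simp
qed

lemma pbox_INT:
  assumes "finite T" "T \<noteq> {}" "\<And>j. j \<in> T \<Longrightarrow> pbox G (A j)"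
  shows "pbox G (\<Inter>(A ` T))"
  using assms by (induction T rule: finite_ne_induct) (auto intro: pbox_Int)

lemma V_IE:
  assumes G: "\<And>j. finite (G j)" and J: "finite J" and A: "\<And>j. j \<in> J \<Longrightarrow> pbox G (A j)"
  shows "intrinsic_volume k (\<Union>(A ` J)) =
    (\<Sum>T | T \<subseteq> J \<and> T \<noteq> {}. (- 1) ^ (card T + 1) * intrinsic_volume k (\<Inter>(A ` T)))"
proof -
  have "intrinsic_volume k (\<Union>(A ` J)) = Lam k G (\<Union>(A ` J))"
    by (rule V_pbox[OF G pbox_UN[OF J A]])
  also have "\<dots> = (\<Sum>T | T \<subseteq> J \<and> T \<noteq> {}. (- 1) ^ (card T + 1) * Lam k G (\<Inter>(A ` T)))"
    by (rule Lam_IE[OF J])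
  also have "\<dots> = (\<Sum>T | T \<subseteq> J \<and> T \<noteq> {}. (- 1) ^ (card T + 1) * intrinsic_volume k (\<Inter>(A ` T)))"
  proof (intro sum.cong refl)
    fix T assume T: "T \<in> {T. T \<subseteq> J \<and> T \<noteq> {}}"
    then have "finite T" using J finite_subset by auto
    then have "pbox G (\<Inter>(A ` T))" using pbox_INT[of T G A] T A by auto
    then show "(- 1) ^ (card T + 1) * Lam k G (\<Inter>(A ` T)) = (- 1) ^ (card T + 1) * intrinsic_volume k (\<Inter>(A ` T))"
      using V_pbox[of G, OF G] by simp
  qed
  finally show ?thesis .
qed

lemma box_V_empty[simp]: "box_V k {} = 0"
  by (simp add: box_V_def)

lemma affine_cbox:
  fixes a b t :: "real^'n::finite" and c :: real
  assumes "c > 0" "a \<le> b"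
  shows "(\<lambda>x. c *\<^sub>R x + t) ` cbox a b = cbox (c *\<^sub>R a + t) (c *\<^sub>R b + t)"
    "c *\<^sub>R a + t \<le> c *\<^sub>R b + t"
proof -
  have "cbox a b \<noteq> {}" using assms by (auto simp: interval_ne_empty_cart less_eq_vec_def)
  then show "(\<lambda>x. c *\<^sub>R x + t) ` cbox a b = cbox (c *\<^sub>R a + t) (c *\<^sub>R b + t)"
    using assms by (simp add: image_affinity_cbox)
  show "c *\<^sub>R a + t \<le> c *\<^sub>R b + t" using assms by (auto simp: less_eq_vec_def)
qed

lemma box_V_affine:
  fixes a b t :: "real^'n::finite" and c :: real
  assumes "c > 0" "Y = {} \<or> (\<exists>a b. a \<le> b \<and> Y = cbox a b)"
  shows "box_V k ((\<lambda>x. c *\<^sub>R x + t) ` Y) = c ^ k * box_V k Y"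
  using assms(2)
proof
  assume "Y = {}" then show ?thesis by simp
next
  assume "\<exists>a b. a \<le> b \<and> Y = cbox a b"
  then obtain a b where ab: "a \<le> b" "Y = cbox a b" by blast
  note af = affine_cbox[OF assms(1) ab(1), of t]
  have "box_V k ((\<lambda>x. c *\<^sub>R x + t) ` Y) =
      (\<Sum>S\<in>{S::'n set. card S = k}. \<Prod>j\<in>S. ((c *\<^sub>R b + t)$j - (c *\<^sub>R a + t)$j))"
    unfolding ab(2) af(1) by (rule box_V_cbox[OF af(2)])
  also have "\<dots> = (\<Sum>S\<in>{S::'n set. card S = k}. c ^ k * (\<Prod>j\<in>S. (b$j - a$j)))"
  proof (intro sum.cong refl)
    fix S :: "'n set" assume "S \<in> {S. card S = k}"
    then have "card S = k" by simp
    have "(\<Prod>j\<in>S. ((c *\<^sub>R b + t)$j - (c *\<^sub>R a + t)$j)) = (\<Prod>j\<in>S. c * (b$j - a$j))"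
      by (intro prod.cong refl) (simp add: algebra_simps)
    also have "\<dots> = c ^ card S * (\<Prod>j\<in>S. (b$j - a$j))"
      by (simp add: prod.distrib)
    finally show "(\<Prod>j\<in>S. ((c *\<^sub>R b + t)$j - (c *\<^sub>R a + t)$j)) = c ^ k * (\<Prod>j\<in>S. (b$j - a$j))"
      using \<open>card S = k\<close> by simp
  qed
  also have "\<dots> = c ^ k * box_V k Y"
    unfolding ab(2) box_V_cbox[OF ab(1)] by (simp add: sum_distrib_left)
  finally show ?thesis .
qed

lemma V_affine:
  fixes t :: "real^'n::finite" and c :: real
  assumes c: "c > 0" and B: "finite B" "\<forall>X\<in>B. is_box X"
  shows "intrinsic_volume k ((\<lambda>x. c *\<^sub>R x + t) ` \<Union>B) = c ^ k * intrinsic_volume k (\<Union>B)"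
proof -
  define h where "h = (\<lambda>x::real^'n. c *\<^sub>R x + t)"
  have injh: "inj h" unfolding h_def inj_def using c by simp
  define B2 where "B2 = image h ` B"
  have B2: "finite B2" "\<forall>X\<in>B2. is_box X"
  proof -
    show "finite B2" using B(1) by (simp add: B2_def)
    show "\<forall>X\<in>B2. is_box X"
    proof
      fix X assume "X \<in> B2"
      then obtain Y where Y: "Y \<in> B" "X = h ` Y" by (auto simp: B2_def)
      obtain a b where ab: "a \<le> b" "Y = cbox a b" using B(2) Y(1) is_box_def by blast
      show "is_box X" unfolding is_box_def Y(2) ab(2) h_def
        using affine_cbox[OF c ab(1), of t] by blast
    qed
  qed
  have U: "h ` \<Union>B = \<Union>B2" by (auto simp: B2_def)
  have injI: "inj_on (image h) A" for A using injh by (simp add: inj_on_def inj_image_eq_iff)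
  have injP: "inj_on (image (image h)) {S. S \<subseteq> B \<and> S \<noteq> {}}"
    using inj_on_image_eq_iff[OF injI[of UNIV]] by (simp add: inj_on_def)
  have im: "{S. S \<subseteq> B2 \<and> S \<noteq> {}} = image (image h) ` {S. S \<subseteq> B \<and> S \<noteq> {}}"
    unfolding B2_def by (auto simp: subset_image_iff)
  have "ie k B2 = (\<Sum>S\<in>{S. S \<subseteq> B \<and> S \<noteq> {}}. (-1) ^ (card (image h ` S) + 1) * box_V k (\<Inter>(image h ` S)))"
    unfolding ie_def im by (subst sum.reindex[OF injP]) (simp add: comp_def)
  also have "\<dots> = (\<Sum>S\<in>{S. S \<subseteq> B \<and> S \<noteq> {}}. c ^ k * ((-1) ^ (card S + 1) * box_V k (\<Inter>S)))"
  proof (intro sum.cong refl)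
    fix S assume S: "S \<in> {S. S \<subseteq> B \<and> S \<noteq> {}}"
    have cs: "card (image h ` S) = card S" by (rule card_image[OF injI])
    have iS: "\<Inter>(image h ` S) = h ` \<Inter>S"
      using image_INT[of h UNIV S "\<lambda>x. x"] injh S by auto
    have fin: "finite S" using S B(1) finite_subset by auto
    have gb: "\<forall>X\<in>S. gbox (brk B) X" using S B(2) is_box_gbox[of _ B "brk B"] by blast
    have "\<Inter>S = {} \<or> gbox (brk B) (\<Inter>S)" using Inter_gbox[OF fin _ gb] S by blast
    then have "\<Inter>S = {} \<or> (\<exists>a b. a \<le> b \<and> \<Inter>S = cbox a b)" unfolding gbox_def by blast
    from box_V_affine[OF c this, of k t]
    have "box_V k (h ` \<Inter>S) = c ^ k * box_V k (\<Inter>S)" unfolding h_def .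
    then show "(-1) ^ (card (image h ` S) + 1) * box_V k (\<Inter>(image h ` S)) =
        c ^ k * ((-1) ^ (card S + 1) * box_V k (\<Inter>S))"
      unfolding cs iS by simp
  qed
  also have "\<dots> = c ^ k * ie k B" unfolding ie_def by (simp add: sum_distrib_left)
  finally have "ie k B2 = c ^ k * ie k B" .
  then show ?thesis
    using intrinsic_volume_ie[OF B2] intrinsic_volume_ie[OF B] U unfolding h_def[symmetric] by simp
qed

lemma card_cells1: "finite g \<Longrightarrow> card (cells1 g) \<le> 2 * card g"
proof -
  assume g: "finite g"
  have inj: "inj_on (\<lambda>c. (fst c, fst c < snd c)) (cells1 g)"
  proof (rule inj_onI)
    fix c c' assume c: "c \<in> cells1 g" "c' \<in> cells1 g" "(fst c, fst c < snd c) = (fst c', fst c' < snd c')"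
    obtain u v where uv: "c = (u,v)" by (cases c)
    obtain u' v' where uv': "c' = (u',v')" by (cases c')
    have h: "u \<in> g" "v \<in> g" "u \<le> v" "\<And>w. w \<in> g \<Longrightarrow> \<not> (u < w \<and> w < v)"
      using c(1) uv by (auto simp: cells1_def)
    have h': "u' \<in> g" "v' \<in> g" "u' \<le> v'" "\<And>w. w \<in> g \<Longrightarrow> \<not> (u' < w \<and> w < v')"
      using c(2) uv' by (auto simp: cells1_def)
    have "u = u'" "(u < v) = (u' < v')" using c(3) uv uv' by auto
    then have "v = v'" using h h' by (smt (verit))
    then show "c = c'" using uv uv' \<open>u = u'\<close> by simp
  qed
  have "card (cells1 g) = card ((\<lambda>c. (fst c, fst c < snd c)) ` cells1 g)"
    by (rule card_image[OF inj, symmetric])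
  also have "\<dots> \<le> card (g \<times> (UNIV :: bool set))"
    by (rule card_mono) (auto simp: g cells1_def)
  also have "\<dots> = 2 * card g" by (simp add: card_cartesian_product g)
  finally show ?thesis .
qed

lemma mid1_inj: "inj_on mid1 (cells1 g)"
proof (rule inj_onI)
  fix c c' assume c: "c \<in> cells1 g" "c' \<in> cells1 g" "mid1 c = mid1 c'"
  obtain u v where uv: "c = (u,v)" by (cases c)
  obtain u' v' where uv': "c' = (u',v')" by (cases c')
  have h: "u \<in> g" "v \<in> g" "u \<le> v" "\<And>w. w \<in> g \<Longrightarrow> \<not> (u < w \<and> w < v)"
    using c(1) uv by (auto simp: cells1_def)
  have h': "u' \<in> g" "v' \<in> g" "u' \<le> v'" "\<And>w. w \<in> g \<Longrightarrow> \<not> (u' < w \<and> w < v')"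
    using c(2) uv' by (auto simp: cells1_def)
  have m: "u + v = u' + v'" using c(3) uv uv' by (simp add: mid1_def)
  have "u = u'"
  proof (rule ccontr)
    assume "u \<noteq> u'"
    then consider "u < u'" | "u' < u" by linarith
    then show False
    proof cases
      case 1
      then have "v' < v" using m h' by linarith
      then show False using h(4)[OF h'(1)] 1 m h' by linarith
    next
      case 2
      then have "v < v'" using m h by linarith
      then show False using h'(4)[OF h(1)] 2 m h by linarith
    qed
  qed
  then show "c = c'" using m uv uv' by simp
qed

lemma prod_abs': "\<bar>prod f A\<bar> = prod (\<lambda>x. \<bar>f x\<bar>) (A::'b set) " for f :: "'b \<Rightarrow> real"
  by (induct A rule: infinite_finite_induct) (simp_all add: abs_mult)

lemma abs_mu:
  fixes c :: "'n::finite \<Rightarrow> real \<times> real" and \<delta> :: real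
  assumes len: "\<And>j c1. c1 \<in> cells1 (G j) \<Longrightarrow> snd c1 - fst c1 \<le> \<delta>" and d0: "0 \<le> \<delta>"
    and c: "c \<in> cellsG G"
  shows "\<bar>mu k c\<bar> \<le> card {S::'n set. card S = k} * \<delta> ^ k"
proof -
  have "\<bar>mu k c\<bar> \<le> (\<Sum>S\<in>{S::'n set. card S = k}. \<bar>\<Prod>j\<in>UNIV. phi S j (c j)\<bar>)"
    unfolding mu_def by (rule sum_abs)
  also have "\<dots> \<le> (\<Sum>S\<in>{S::'n set. card S = k}. \<delta> ^ k)"
  proof (rule sum_mono)
    fix S :: "'n set" assume S: "S \<in> {S. card S = k}"
    have "\<bar>\<Prod>j\<in>UNIV. phi S j (c j)\<bar> = (\<Prod>j\<in>UNIV. \<bar>phi S j (c j)\<bar>)" by (rule prod_abs')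
    also have "\<dots> \<le> (\<Prod>j\<in>UNIV. if j \<in> S then \<delta> else 1)"
    proof (rule prod_mono)
      fix j :: 'n
      have cj: "c j \<in> cells1 (G j)" using c by (auto simp: cellsG_def PiE_iff)
      show "0 \<le> \<bar>phi S j (c j)\<bar> \<and> \<bar>phi S j (c j)\<bar> \<le> (if j \<in> S then \<delta> else 1)"
        using len[OF cj] d0 by (auto simp: phi_def)
    qed
    also have "\<dots> = \<delta> ^ card S" by (simp add: prod.If_cases Int_absorb1)
    finally show "\<bar>\<Prod>j\<in>UNIV. phi S j (c j)\<bar> \<le> \<delta> ^ k" using S by simp
  qed
  also have "\<dots> = card {S::'n set. card S = k} * \<delta> ^ k" by simp
  finally show ?thesis .
qed

lemma V_bound:
  fixes A :: "(real^'n::finite) set" and \<delta> :: real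
  assumes G: "\<And>j. finite (G j)" and A: "pbox G A" and AH: "A \<subseteq> {x. \<exists>l. x$l \<in> P}"
    and P: "finite P"
    and len: "\<And>j c1. c1 \<in> cells1 (G j) \<Longrightarrow> snd c1 - fst c1 \<le> \<delta>" and d0: "0 \<le> \<delta>"
    and N: "\<And>j. card (G j) \<le> N"
  shows "\<bar>intrinsic_volume k A\<bar> \<le> card {S::'n set. card S = k} * \<delta> ^ k *
            (CARD('n) * card P * (2 * N) ^ (CARD('n) - 1))"
proof -
  define K where "K = card {S::'n set. card S = k} * \<delta> ^ k"
  have K0: "0 \<le> K" unfolding K_def using d0 by simp
  define Q where "Q = (\<lambda>l. {c \<in> cellsG G. mid1 (c l) \<in> P})"
  have fc: "finite (cellsG G)" using finite_cellsG[of G] G by blast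
  have "intrinsic_volume k A = Lam k G A" by (rule V_pbox[of G, OF G A])
  then have "\<bar>intrinsic_volume k A\<bar> \<le> (\<Sum>c\<in>cellsG G. \<bar>indicator A (midv c) * mu k c\<bar>)"
    unfolding Lam_def by (simp add: sum_abs)
  also have "\<dots> \<le> (\<Sum>c\<in>cellsG G. if c \<in> (\<Union>l. Q l) then K else 0)"
  proof (rule sum_mono)
    fix c assume c: "c \<in> cellsG G"
    show "\<bar>indicator A (midv c) * mu k c\<bar> \<le> (if c \<in> (\<Union>l. Q l) then K else 0)"
    proof (cases "midv c \<in> A")
      case True
      then obtain l where "(midv c)$l \<in> P" using AH by blast
      then have "c \<in> Q l" using c by (simp add: Q_def midv_def)
      then show ?thesis using True abs_mu[of G \<delta> c k, OF len d0 c] by (auto simp: K_def)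
    next
      case False then show ?thesis using K0 by simp
    qed
  qed
  also have "\<dots> = card (cellsG G \<inter> (\<Union>l. Q l)) * K"
    using sum.inter_restrict[OF fc, of "\<lambda>_. K" "\<Union>l. Q l"] by simp
  also have "\<dots> \<le> (\<Sum>l\<in>UNIV. card (Q l)) * K"
  proof -
    have "cellsG G \<inter> (\<Union>l. Q l) = (\<Union>l. Q l)" by (auto simp: Q_def)
    moreover have "card (\<Union>l. Q l) \<le> (\<Sum>l\<in>UNIV. card (Q l))" by (rule card_UN_le) simp
    ultimately have "real (card (cellsG G \<inter> (\<Union>l. Q l))) \<le> (\<Sum>l\<in>UNIV. real (card (Q l)))"
      by (metis of_nat_le_iff of_nat_sum)
    then show ?thesis using K0 by (intro mult_right_mono) simp_all
  qed
  also have "\<dots> \<le> (\<Sum>l\<in>(UNIV::'n set). card P * (2 * N) ^ (CARD('n) - 1)) * K"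
  proof -
    have "card (Q l) \<le> card P * (2 * N) ^ (CARD('n) - 1)" for l
    proof -
      define F where "F = (\<lambda>j. if j = l then {c1 \<in> cells1 (G j). mid1 c1 \<in> P} else cells1 (G j))"
      have "Q l = PiE UNIV F"
      proof (intro set_eqI iffI)
        fix x assume "x \<in> Q l" then show "x \<in> PiE UNIV F"
          unfolding Q_def F_def cellsG_def by (auto simp: PiE_iff)
      next
        fix x assume x: "x \<in> PiE UNIV F"
        have "x i \<in> cells1 (G i)" for i using x[unfolded PiE_iff, THEN conjunct1, rule_format, of i]
          by (auto simp: F_def split: if_splits)
        moreover have "mid1 (x l) \<in> P" using x[unfolded PiE_iff, THEN conjunct1, rule_format, of l]
          by (auto simp: F_def)
        ultimately show "x \<in> Q l" using x unfolding Q_def cellsG_def by (auto simp: PiE_iff)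
      qed
      then have "card (Q l) = (\<Prod>j\<in>UNIV. card (F j))" by (simp add: card_PiE)
      also have "\<dots> = card (F l) * (\<Prod>j\<in>UNIV - {l}. card (F j))"
        by (simp add: prod.remove)
      also have "\<dots> \<le> card P * (\<Prod>j\<in>UNIV - {l}. 2 * N)"
      proof (rule mult_mono)
        have "card (F l) \<le> card P"
          unfolding F_def using card_inj_on_le[of mid1 "{c1 \<in> cells1 (G l). mid1 c1 \<in> P}" P] mid1_inj P
          by (auto intro: inj_on_subset)
        then show "card (F l) \<le> card P" .
        show "(\<Prod>j\<in>UNIV - {l}. card (F j)) \<le> (\<Prod>j\<in>UNIV - {l}. 2 * N)"
        proof (rule prod_mono)
          fix j assume "j \<in> UNIV - {l}"
          then have "card (F j) = card (cells1 (G j))" by (simp add: F_def)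
          also have "\<dots> \<le> 2 * card (G j)" by (rule card_cells1[OF G])
          also have "\<dots> \<le> 2 * N" using N[of j] by simp
          finally show "0 \<le> card (F j) \<and> card (F j) \<le> 2 * N" by simp
        qed
      qed simp_all
      also have "\<dots> = card P * (2 * N) ^ (CARD('n) - 1)"
        by (simp add: card_Diff_singleton)
      finally show ?thesis .
    qed
    then have "(\<Sum>l\<in>UNIV. card (Q l)) \<le> (\<Sum>l\<in>(UNIV::'n set). card P * (2 * N) ^ (CARD('n) - 1))"
      by (intro sum_mono)
    then show ?thesis using K0 by (intro mult_right_mono) (simp only: of_nat_le_iff, simp)
  qed
  also have "\<dots> = K * (CARD('n) * card P * (2 * N) ^ (CARD('n) - 1))" by simp
  finally show ?thesis unfolding K_def by simp
qed

definition ugrid :: "nat \<Rightarrow> nat \<Rightarrow> real set" where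
  "ugrid M n = (\<lambda>i. real i / real M ^ n) ` {0..M^n}"

lemma finite_ugrid: "finite (ugrid M n)"
  by (simp add: ugrid_def)

lemma card_ugrid: "card (ugrid M n) \<le> M^n + 1"
  unfolding ugrid_def using card_image_le[of "{0..M^n}" "\<lambda>i. real i / real M ^ n"] by simp

lemma ugrid_len:
  assumes M: "M \<ge> 1" and c: "c \<in> cells1 (ugrid M n)"
  shows "snd c - fst c \<le> 1 / real M ^ n"
proof -
  obtain u v where uv: "c = (u,v)" by (cases c)
  have h: "u \<in> ugrid M n" "v \<in> ugrid M n" "u \<le> v" "\<And>w. w \<in> ugrid M n \<Longrightarrow> \<not> (u < w \<and> w < v)"
    using c uv by (auto simp: cells1_def)
  obtain i where i: "i \<le> M^n" "u = real i / real M ^ n" using h(1) by (auto simp: ugrid_def)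
  obtain i' where i': "i' \<le> M^n" "v = real i' / real M ^ n" using h(2) by (auto simp: ugrid_def)
  have Mp: "real M ^ n > 0" using M by simp
  show ?thesis
  proof (rule ccontr)
    assume "\<not> ?thesis"
    then have "v - u > 1 / real M ^ n" using uv by simp
    then have "(real i' - real i) / real M ^ n > 1 / real M ^ n" using i(2) i'(2) uv by (simp add: diff_divide_distrib)
    then have "real i' - real i > 1" using Mp by (simp add: divide_less_cancel) blast
    then have lt: "i + 1 < i'" by linarith
    have "real (i+1) / real M ^ n \<in> ugrid M n" using lt i' unfolding ugrid_def by (intro imageI) simp
    moreover have "u < real (i+1) / real M ^ n" "real (i+1) / real M ^ n < v"
      using i(2) i'(2) Mp lt by (simp_all add: divide_strict_right_mono)
    ultimately show False using h(4) by blast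
  qed
qed

lemma finite_grid_idx: "M \<ge> 1 \<Longrightarrow> finite (grid_idx M n :: ('n::finite \<Rightarrow> nat) set)"
proof -
  have "grid_idx M n = (PiE UNIV (\<lambda>_::'n. {..<M^n}))" unfolding grid_idx_def by (auto simp: PiE_iff)
  then show ?thesis by (simp add: finite_PiE)
qed

lemma card_grid_idx1: "M \<ge> 1 \<Longrightarrow> card (grid_idx M 1 :: ('n::finite \<Rightarrow> nat) set) = M ^ CARD('n)"
proof -
  have "grid_idx M 1 = (PiE UNIV (\<lambda>_::'n. {..<M}))" unfolding grid_idx_def by (auto simp: PiE_iff)
  then show ?thesis by (simp add: card_PiE)
qed

lemma grid_cube_gbox:
  assumes M: "M \<ge> 1" and i: "i \<in> grid_idx M n"
  shows "gbox (\<lambda>_. ugrid M n) (grid_cube M n (i :: 'n::finite \<Rightarrow> nat))"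
proof -
  have "real (i j) / real M ^ n \<in> ugrid M n" "real (i j + 1) / real M ^ n \<in> ugrid M n" for j
  proof -
    have "i j < M^n" using i by (simp add: grid_idx_def)
    then have "i j \<in> {0..M^n}" "i j + 1 \<in> {0..M^n}" by auto
    then show "real (i j) / real M ^ n \<in> ugrid M n" "real (i j + 1) / real M ^ n \<in> ugrid M n"
      unfolding ugrid_def by (intro image_eqI[OF _ \<open>i j \<in> _\<close>], simp) (rule image_eqI[OF _ \<open>i j + 1 \<in> _\<close>], simp)
  qed
  moreover have "(\<chi> j. real (i j) / real M ^ n) \<le> (\<chi> j. real (i j + 1) / real M ^ n)"
    using M by (simp add: less_eq_vec_def divide_right_mono)
  ultimately show ?thesis unfolding gbox_def grid_cube_def
    by (intro exI[of _ "(\<chi> j. real (i j) / real M ^ n)"] exI[of _ "(\<chi> j. real (i j + 1) / real M ^ n)"]) simp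
qed

lemma grid_cube_is_box:
  assumes M: "M \<ge> 1"
  shows "is_box (grid_cube M n (i :: 'n::finite \<Rightarrow> nat))"
proof -
  have "(\<chi> j. real (i j) / real M ^ n) \<le> (\<chi> j. real (i j + 1) / real M ^ n)"
    using M by (simp add: less_eq_vec_def divide_right_mono)
  then show ?thesis unfolding is_box_def grid_cube_def by blast
qed

lemma Cset_eq: "Cset M X n = \<Union>(grid_cube M n ` {i \<in> grid_idx M n. \<not> kept M X n i})"
  unfolding Cset_def by blast

lemma Cset_sub_eq: "Cset_sub M X n jj =
   \<Union>(grid_cube M n ` {i \<in> grid_idx M n. grid_cube M n i \<subseteq> grid_cube M 1 jj \<and> \<not> kept M X n i})"
  unfolding Cset_sub_def by blast

lemma pbox_Cset:
  assumes M: "M \<ge> 1"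
  shows "pbox (\<lambda>_. ugrid M n) (Cset M X n :: (real^'n::finite) set)"
  unfolding Cset_eq
  by (rule pbox_UN) (use M finite_grid_idx[OF M, of n] grid_cube_gbox[OF M] pbox_gbox in auto)

lemma pbox_Cset_sub:
  assumes M: "M \<ge> 1"
  shows "pbox (\<lambda>_. ugrid M n) (Cset_sub M X n jj :: (real^'n::finite) set)"
  unfolding Cset_sub_eq
  by (rule pbox_UN) (use M finite_grid_idx[OF M, of n] grid_cube_gbox[OF M] pbox_gbox in auto)

lemma Cset_0: "Cset M X 0 = {}"
  unfolding Cset_def by simp

lemma nat_div_iff: "0 < q \<Longrightarrow> (a div q = b) \<longleftrightarrow> (b * q \<le> a \<and> a + 1 \<le> (b + 1) * q)" for a b q :: nat
proof
  assume q: "0 < q" and ab: "a div q = b"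
  have "a = q * b + a mod q" using div_mult_mod_eq[of a q] ab by (simp add: mult.commute)
  moreover have "a mod q < q" using q by simp
  ultimately show "b * q \<le> a \<and> a + 1 \<le> (b + 1) * q" by (simp add: algebra_simps)
next
  assume q: "0 < q" and h: "b * q \<le> a \<and> a + 1 \<le> (b + 1) * q"
  show "a div q = b" by (rule div_nat_eqI) (use h in \<open>auto simp: algebra_simps\<close>)
qed

lemma real_div_le_iff:
  assumes M: "M \<ge> 1"
  shows "(real a / real M \<le> real b / real M ^ Suc m) \<longleftrightarrow> a * M^m \<le> b"
proof -
  have p: "real M > 0" "real M ^ m > 0" using M by auto
  have "(real a / real M \<le> real b / real M ^ Suc m) \<longleftrightarrow> real a * real M ^ m \<le> real b"
    using p by (simp add: field_simps)
  also have "\<dots> \<longleftrightarrow> a * M^m \<le> b" by (metis of_nat_le_iff of_nat_mult of_nat_power)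
  finally show ?thesis .
qed

lemma real_div_le_iff2:
  assumes M: "M \<ge> 1"
  shows "(real b / real M ^ Suc m \<le> real a / real M) \<longleftrightarrow> b \<le> a * M^m"
proof -
  have p: "real M > 0" "real M ^ m > 0" using M by auto
  have "(real b / real M ^ Suc m \<le> real a / real M) \<longleftrightarrow> real b \<le> real a * real M ^ m"
    using p by (simp add: field_simps)
  also have "\<dots> \<longleftrightarrow> b \<le> a * M^m" by (metis of_nat_le_iff of_nat_mult of_nat_power)
  finally show ?thesis .
qed

lemma cube_sub_iff:
  assumes M: "M \<ge> 1"
  shows "grid_cube M (Suc m) i \<subseteq> grid_cube M 1 (jj :: 'n::finite \<Rightarrow> nat) \<longleftrightarrow> (\<forall>l. i l div M^m = jj l)"
proof -
  have ne: "\<forall>l. (\<chi> j. real (i j) / real M ^ Suc m) $ l \<le> (\<chi> j. real (i j + 1) / real M ^ Suc m) $ l"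
    using M by (simp add: divide_right_mono)
  have "grid_cube M (Suc m) i \<subseteq> grid_cube M 1 jj \<longleftrightarrow>
     (\<forall>l. real (jj l) / real M \<le> real (i l) / real M ^ Suc m \<and> real (i l + 1) / real M ^ Suc m \<le> real (jj l + 1) / real M)"
    unfolding grid_cube_def subset_interval_cart(1) using ne by simp
  also have "\<dots> \<longleftrightarrow> (\<forall>l. jj l * M^m \<le> i l \<and> i l + 1 \<le> (jj l + 1) * M^m)"
    using real_div_le_iff[OF M] real_div_le_iff2[OF M] by presburger
  also have "\<dots> \<longleftrightarrow> (\<forall>l. i l div M^m = jj l)"
    using nat_div_iff[of "M^m"] M by simp
  finally show ?thesis .
qed

definition Xs :: "nat \<Rightarrow> (nat \<Rightarrow> ('n \<Rightarrow> nat) \<Rightarrow> bool) \<Rightarrow> ('n \<Rightarrow> nat) \<Rightarrow> nat \<Rightarrow> ('n \<Rightarrow> nat) \<Rightarrow> bool" where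
  "Xs M X jj m i = X (Suc m) (\<lambda>l. jj l * M^m + i l)"

lemma kept_Suc_split:
  assumes M: "M \<ge> 1"
  shows "kept M X (Suc m) i = (X 1 (\<lambda>l. i l div M^m) \<and> kept M (Xs M X (\<lambda>l. i l div M^m)) m (\<lambda>l. i l mod M^m))"
proof (induction m arbitrary: i)
  case 0
  then show ?case by simp
next
  case (Suc m)
  have e1: "(\<lambda>l. i l div M div M^m) = (\<lambda>l. i l div M^Suc m)" by (simp add: div_mult2_eq)
  have e2: "(\<lambda>l. i l div M mod M^m) = (\<lambda>l. i l mod M^Suc m div M)"
  proof
    fix l
    have "i l mod (M * M^m) = M * (i l div M mod M^m) + i l mod M" by (rule mod_mult2_eq)
    then show "i l div M mod M^m = i l mod M^Suc m div M" using M by simp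
  qed
  have e3: "(\<lambda>l. i l div (M * M ^ m) * (M * M ^ m) + i l mod (M * M ^ m)) = i"
    by (simp only: div_mult_mod_eq)
  have "kept M X (Suc (Suc m)) i = (kept M X (Suc m) (\<lambda>l. i l div M) \<and> X (Suc (Suc m)) i)" by simp
  also have "\<dots> = ((X 1 (\<lambda>l. i l div M div M^m) \<and> kept M (Xs M X (\<lambda>l. i l div M div M^m)) m (\<lambda>l. i l div M mod M^m))
        \<and> X (Suc (Suc m)) i)" using Suc.IH[of "\<lambda>l. i l div M"] by simp
  also have "\<dots> = (X 1 (\<lambda>l. i l div M^Suc m) \<and> kept M (Xs M X (\<lambda>l. i l div M^Suc m)) (Suc m) (\<lambda>l. i l mod M^Suc m))"
    unfolding e1 e2 by (simp add: Xs_def e3 conj_assoc)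
  finally show ?case .
qed

definition sh :: "nat \<Rightarrow> ('n \<Rightarrow> nat) \<Rightarrow> nat \<Rightarrow> ('n \<Rightarrow> nat) \<Rightarrow> ('n \<Rightarrow> nat)" where
  "sh M jj m i' = (\<lambda>l. jj l * M^m + i' l)"

definition hh :: "nat \<Rightarrow> ('n::finite \<Rightarrow> nat) \<Rightarrow> real^'n \<Rightarrow> real^'n" where
  "hh M jj x = (1 / real M) *\<^sub>R x + (\<chi> l. real (jj l) / real M)"

lemma sh_idx:
  assumes M: "M \<ge> 1" and jj: "jj \<in> grid_idx M 1" and i': "i' \<in> grid_idx M m"
  shows "sh M jj m i' \<in> grid_idx M (Suc m)" "\<And>l. sh M jj m i' l div M^m = jj l" "\<And>l. sh M jj m i' l mod M^m = i' l"
proof -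
  have a: "jj l < M" "i' l < M^m" for l using jj i' by (auto simp: grid_idx_def)
  show "sh M jj m i' \<in> grid_idx M (Suc m)" unfolding grid_idx_def sh_def
  proof (intro CollectI allI)
    fix l
    have "jj l * M^m + i' l < (jj l + 1) * M^m" using a[of l] by simp
    also have "\<dots> \<le> M * M^m" using a[of l] by (intro mult_right_mono) auto
    finally show "jj l * M ^ m + i' l < M ^ Suc m" by simp
  qed
  show "sh M jj m i' l div M^m = jj l" "sh M jj m i' l mod M^m = i' l" for l
    using a[of l] by (simp_all add: sh_def)
qed

lemma cube_sh:
  assumes M: "M \<ge> 1"
  shows "grid_cube M (Suc m) (sh M jj m i') = hh M (jj :: 'n::finite \<Rightarrow> nat) ` grid_cube M m i'"
proof -
  have c: "1 / real M > 0" using M by simp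
  have le: "(\<chi> j. real (i' j) / real M ^ m) \<le> (\<chi> j. real (i' j + 1) / real M ^ m)"
    using M by (simp add: less_eq_vec_def divide_right_mono)
  have Mp: "real M > 0" "real M ^ m > 0" using M by auto
  have "hh M jj ` grid_cube M m i' =
      cbox ((1 / real M) *\<^sub>R (\<chi> j. real (i' j) / real M ^ m) + (\<chi> l. real (jj l) / real M))
           ((1 / real M) *\<^sub>R (\<chi> j. real (i' j + 1) / real M ^ m) + (\<chi> l. real (jj l) / real M))"
    unfolding hh_def grid_cube_def by (rule affine_cbox(1)[OF c le])
  also have "\<dots> = grid_cube M (Suc m) (sh M jj m i')"
    unfolding grid_cube_def sh_def using Mp
    by (intro arg_cong2[where f=cbox]) (simp_all add: vec_eq_iff field_simps)
  finally show ?thesis by simp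
qed

lemma Cset_sub_Suc:
  assumes M: "M \<ge> 1" and jj: "jj \<in> grid_idx M 1"
  shows "Cset_sub M X (Suc m) (jj :: 'n::finite \<Rightarrow> nat) = hh M jj `
     \<Union>(grid_cube M m ` {i' \<in> grid_idx M m. \<not> (X 1 jj \<and> kept M (Xs M X jj) m i')})"
proof -
  define S where "S = {i' \<in> grid_idx M m. \<not> (X 1 jj \<and> kept M (Xs M X jj) m i')}"
  have idx: "{i \<in> grid_idx M (Suc m). grid_cube M (Suc m) i \<subseteq> grid_cube M 1 jj \<and> \<not> kept M X (Suc m) i}
      = sh M jj m ` S"
  proof (intro set_eqI iffI)
    fix i assume i: "i \<in> {i \<in> grid_idx M (Suc m). grid_cube M (Suc m) i \<subseteq> grid_cube M 1 jj \<and> \<not> kept M X (Suc m) i}"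
    then have "grid_cube M (Suc m) i \<subseteq> grid_cube M 1 jj" by blast
    then have dv: "(\<lambda>l. i l div M^m) = jj" using cube_sub_iff[OF M, of m i jj] by auto
    define i' where "i' = (\<lambda>l. i l mod M^m)"
    have "i' \<in> grid_idx M m" using M by (simp add: i'_def grid_idx_def)
    moreover have "\<not> (X 1 jj \<and> kept M (Xs M X jj) m i')"
    proof -
      have nk: "\<not> kept M X (Suc m) i" using i by blast
      then show ?thesis unfolding kept_Suc_split[OF M, of X m i] dv i'_def .
    qed
    moreover have "i = sh M jj m i'"
    proof
      fix l show "i l = sh M jj m i' l"
        using div_mult_mod_eq[of "i l" "M^m"] fun_cong[OF dv, of l] by (simp add: sh_def i'_def)
    qed
    ultimately show "i \<in> sh M jj m ` S" unfolding S_def by blast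
  next
    fix i assume "i \<in> sh M jj m ` S"
    then obtain i' where i': "i' \<in> grid_idx M m" "\<not> (X 1 jj \<and> kept M (Xs M X jj) m i')" "i = sh M jj m i'"
      unfolding S_def by blast
    note sx = sh_idx[OF M jj i'(1)]
    have dv: "(\<lambda>l. i l div M^m) = jj" "(\<lambda>l. i l mod M^m) = i'" using sx(2,3) i'(3) by auto
    have c1: "grid_cube M (Suc m) i \<subseteq> grid_cube M 1 jj" using cube_sub_iff[OF M, of m i jj] dv(1) by metis
    have c2: "\<not> kept M X (Suc m) i" unfolding kept_Suc_split[OF M, of X m i] dv using i'(2) .
    show "i \<in> {i \<in> grid_idx M (Suc m). grid_cube M (Suc m) i \<subseteq> grid_cube M 1 jj \<and> \<not> kept M X (Suc m) i}"
      using sx(1) i'(3) c1 c2 by blast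
  qed
  have "Cset_sub M X (Suc m) jj = \<Union>(grid_cube M (Suc m) ` sh M jj m ` S)"
    unfolding Cset_sub_eq idx ..
  also have "\<dots> = \<Union>((\<lambda>i'. hh M jj ` grid_cube M m i') ` S)"
    by (simp add: image_image cube_sh[OF M])
  also have "\<dots> = hh M jj ` \<Union>(grid_cube M m ` S)" by (simp add: image_UN)
  finally show ?thesis unfolding S_def .
qed

lemma cover_unit:
  assumes M: "M \<ge> 1"
  shows "\<Union>(grid_cube M m ` grid_idx M m) = (cbox 0 1 :: (real^'n::finite) set)"
proof (intro set_eqI iffI)
  fix x :: "real^'n" assume "x \<in> \<Union>(grid_cube M m ` grid_idx M m)"
  then obtain i where i: "i \<in> grid_idx M m" "x \<in> grid_cube M m i" by blast
  have Mp: "real M ^ m > 0" using M by simp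
  show "x \<in> cbox 0 1" unfolding mem_box_cart
  proof
    fix l
    have il: "i l + 1 \<le> M^m" using i(1) by (simp add: grid_idx_def Suc_le_eq)
    then have "real (i l + 1) \<le> real M ^ m" by (metis of_nat_le_iff of_nat_power)
    then have "real (i l + 1) / real M ^ m \<le> 1" using Mp by simp
    moreover have "0 \<le> real (i l) / real M ^ m" by simp
    moreover have "real (i l) / real M ^ m \<le> x$l" "x$l \<le> real (i l + 1) / real M ^ m"
      using i(2) unfolding grid_cube_def mem_box_cart by auto
    ultimately have "0 \<le> x $ l" "x $ l \<le> 1" by linarith+
    then show "0 $ l \<le> x $ l \<and> x $ l \<le> 1 $ l" by simp
  qed
next
  fix x :: "real^'n" assume x: "x \<in> cbox 0 1"
  have Mp: "real M ^ m > 0" "M^m \<ge> 1" using M by auto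
  define i where "i = (\<lambda>l. min (nat \<lfloor>x$l * real M ^ m\<rfloor>) (M^m - 1))"
  have x01: "0 \<le> x$l" "x$l \<le> 1" for l using x by (auto simp: mem_box_cart)
  have "i \<in> grid_idx M m" unfolding grid_idx_def i_def
  proof (intro CollectI allI)
    fix l show "min (nat \<lfloor>x$l * real M ^ m\<rfloor>) (M^m - 1) < M^m" using Mp(2) by linarith
  qed
  moreover have "x \<in> grid_cube M m i" unfolding grid_cube_def mem_box_cart
  proof
    fix l
    define y where "y = x$l * real M ^ m"
    have y0: "0 \<le> y" "y \<le> real M ^ m" using x01[of l] Mp by (auto simp: y_def)
    have fl: "real (nat \<lfloor>y\<rfloor>) \<le> y" "y < real (nat \<lfloor>y\<rfloor>) + 1" using y0 by linarith+
    have "real (i l) \<le> y \<and> y \<le> real (i l) + 1"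
    proof (cases "nat \<lfloor>y\<rfloor> \<le> M^m - 1")
      case True
      then have "i l = nat \<lfloor>y\<rfloor>" by (simp add: i_def y_def)
      then show ?thesis using fl by simp
    next
      case False
      then have "i l = M^m - 1" by (simp add: i_def y_def)
      moreover have "real (M^m - 1) = real M ^ m - 1" using Mp by (simp add: of_nat_diff)
      moreover have "real M ^ m - 1 \<le> y"
      proof -
        have "M^m \<le> nat \<lfloor>y\<rfloor>" using False by simp
        then have "real M ^ m \<le> real (nat \<lfloor>y\<rfloor>)" by (metis of_nat_le_iff of_nat_power)
        then show ?thesis using fl by linarith
      qed
      ultimately show ?thesis using y0 by simp
    qed
    then show "(\<chi> j. real (i j) / real M ^ m) $ l \<le> x $ l \<and> x $ l \<le> (\<chi> j. real (i j + 1) / real M ^ m) $ l"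
      using Mp unfolding y_def by (simp add: field_simps)
  qed
  ultimately show "x \<in> \<Union>(grid_cube M m ` grid_idx M m)" by blast
qed

lemma V_Cset_sub:
  assumes M: "M \<ge> 1" and jj: "jj \<in> grid_idx M 1"
  shows "intrinsic_volume k (Cset_sub M X (Suc m) (jj :: 'n::finite \<Rightarrow> nat)) = (1 / real M) ^ k *
     (if X 1 jj then intrinsic_volume k (Cset M (Xs M X jj) m) else intrinsic_volume k (cbox (0::real^'n) 1))"
proof -
  define S where "S = {i' \<in> grid_idx M m. \<not> (X 1 jj \<and> kept M (Xs M X jj) m i')}"
  have c: "1 / real M > 0" using M by simp
  have "finite S" unfolding S_def by (rule finite_subset[OF _ finite_grid_idx[OF M, of m]]) auto
  then have B: "finite (grid_cube M m ` S)" "\<forall>Y\<in>grid_cube M m ` S. is_box Y"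
    using grid_cube_is_box[OF M] by auto
  have "intrinsic_volume k (Cset_sub M X (Suc m) jj) = (1 / real M) ^ k * intrinsic_volume k (\<Union>(grid_cube M m ` S))"
    unfolding Cset_sub_Suc[OF M jj] S_def[symmetric] hh_def by (rule V_affine[OF c B])
  moreover have "\<Union>(grid_cube M m ` S) = (if X 1 jj then Cset M (Xs M X jj) m else cbox 0 1)"
    using cover_unit[OF M, of m] unfolding S_def Cset_eq by auto
  ultimately show ?thesis by simp
qed

lemma Cset_decomp:
  assumes M: "M \<ge> 1"
  shows "Cset M X (Suc m) = (\<Union>jj\<in>grid_idx M 1. Cset_sub M X (Suc m) (jj :: 'n::finite \<Rightarrow> nat))"
proof (intro set_eqI iffI)
  fix x assume "x \<in> Cset M X (Suc m)"
  then obtain i where i: "i \<in> grid_idx M (Suc m)" "\<not> kept M X (Suc m) i" "x \<in> grid_cube M (Suc m) i"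
    unfolding Cset_eq by blast
  define jj where "jj = (\<lambda>l. i l div M^m)"
  have "jj \<in> grid_idx M 1" using i(1) M unfolding grid_idx_def jj_def
    by (auto simp: div_less_iff_less_mult mult.commute)
  moreover have "grid_cube M (Suc m) i \<subseteq> grid_cube M 1 jj" using cube_sub_iff[OF M, of m i jj] by (simp add: jj_def)
  ultimately show "x \<in> (\<Union>jj\<in>grid_idx M 1. Cset_sub M X (Suc m) jj)"
    using i unfolding Cset_sub_eq by blast
next
  fix x assume "x \<in> (\<Union>jj\<in>grid_idx M 1. Cset_sub M X (Suc m) (jj :: 'n::finite \<Rightarrow> nat))"
  then show "x \<in> Cset M X (Suc m)" unfolding Cset_sub_eq Cset_eq by blast
qed

lemma Cset_sub_in: "Cset_sub M X n jj \<subseteq> grid_cube M 1 jj"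
  unfolding Cset_sub_def by blast

definition Pset :: "nat \<Rightarrow> real set" where
  "Pset M = (\<lambda>a. real a / real M) ` {1..<M}"

lemma finite_Pset: "finite (Pset M)" and card_Pset: "card (Pset M) \<le> M"
proof -
  show "finite (Pset M)" by (simp add: Pset_def)
  have "card (Pset M) \<le> card {1..<M}" unfolding Pset_def by (rule card_image_le) simp
  then show "card (Pset M) \<le> M" by simp
qed

lemma two_cubes_H:
  assumes M: "M \<ge> 1" and j1: "j1 \<in> grid_idx M 1" and j2: "j2 \<in> grid_idx M 1" and ne: "j1 \<noteq> j2"
  shows "grid_cube M 1 j1 \<inter> grid_cube M 1 (j2 :: 'n::finite \<Rightarrow> nat) \<subseteq> {x. \<exists>l. x$l \<in> Pset M}"
proof
  fix x assume x: "x \<in> grid_cube M 1 j1 \<inter> grid_cube M 1 j2"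
  obtain l where l: "j1 l \<noteq> j2 l" using ne by auto
  have Mp: "real M > 0" using M by simp
  have b1: "real (j1 l) / real M \<le> x$l" "x$l \<le> real (j1 l + 1) / real M"
    and b2: "real (j2 l) / real M \<le> x$l" "x$l \<le> real (j2 l + 1) / real M"
  proof -
    have "x \<in> grid_cube M 1 j1" "x \<in> grid_cube M 1 j2" using x by auto
    then have "\<forall>i. (\<chi> j. real (j1 j) / real M ^ 1) $ i \<le> x $ i \<and> x $ i \<le> (\<chi> j. real (j1 j + 1) / real M ^ 1) $ i"
      "\<forall>i. (\<chi> j. real (j2 j) / real M ^ 1) $ i \<le> x $ i \<and> x $ i \<le> (\<chi> j. real (j2 j + 1) / real M ^ 1) $ i"
      unfolding grid_cube_def mem_box_cart by blast+
    then show "real (j1 l) / real M \<le> x$l" "x$l \<le> real (j1 l + 1) / real M"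
      "real (j2 l) / real M \<le> x$l" "x$l \<le> real (j2 l + 1) / real M" by simp_all
  qed
  have lt: "j1 l < M" "j2 l < M" using j1 j2 by (auto simp: grid_idx_def)
  have "x$l \<in> Pset M"
  proof (cases "j1 l < j2 l")
    case True
    then have "real (j1 l + 1) \<le> real (j2 l)" by simp
    then have "real (j1 l + 1) / real M \<le> real (j2 l) / real M" using Mp by (simp add: divide_right_mono)
    then have "x$l = real (j2 l) / real M" using b1 b2 by linarith
    moreover have "j2 l \<in> {1..<M}" using True lt by auto
    ultimately show ?thesis unfolding Pset_def by blast
  next
    case False
    then have F: "j2 l < j1 l" using l by simp
    then have "real (j2 l + 1) \<le> real (j1 l)" by simp
    then have "real (j2 l + 1) / real M \<le> real (j1 l) / real M" using Mp by (simp add: divide_right_mono)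
    then have "x$l = real (j1 l) / real M" using b1 b2 by linarith
    moreover have "j1 l \<in> {1..<M}" using F lt by auto
    ultimately show ?thesis unfolding Pset_def by blast
  qed
  then show "x \<in> {x. \<exists>l. x$l \<in> Pset M}" by blast
qed

lemma inter_H:
  assumes M: "M \<ge> 1" and T: "T \<subseteq> grid_idx M 1" "2 \<le> card T"
  shows "(\<Inter>jj\<in>T. Cset_sub M X n (jj :: 'n::finite \<Rightarrow> nat)) \<subseteq> {x. \<exists>l. x$l \<in> Pset M}"
proof -
  obtain j1 j2 where j: "j1 \<in> T" "j2 \<in> T" "j1 \<noteq> j2"
  proof -
    have "\<not> card T \<le> 1" using T(2) by simp
    then obtain j1 j2 where "j1 \<in> T" "j2 \<in> T" "j1 \<noteq> j2"
      by (metis card_le_Suc0_iff_eq One_nat_def card.infinite zero_le_one)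
    then show ?thesis using that by blast
  qed
  have "(\<Inter>jj\<in>T. Cset_sub M X n jj) \<subseteq> grid_cube M 1 j1 \<inter> grid_cube M 1 j2"
    using j Cset_sub_in by blast
  also have "\<dots> \<subseteq> {x. \<exists>l. x$l \<in> Pset M}" using two_cubes_H[OF M _ _ j(3)] j T(1) by blast
  finally show ?thesis .
qed

lemma kept_cong:
  assumes "\<And>m i. 1 \<le> m \<Longrightarrow> m \<le> n \<Longrightarrow> i \<in> grid_idx M m \<Longrightarrow> X m i = Y m i"
    and "i \<in> grid_idx M n" and M: "M \<ge> 1"
  shows "kept M X n i = kept M Y n i"
  using assms(1,2)
proof (induction n arbitrary: i)
  case 0 then show ?case by simp
next
  case (Suc n)
  have "(\<lambda>j. i j div M) \<in> grid_idx M n" using Suc.prems(2) M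
    by (auto simp: grid_idx_def div_less_iff_less_mult mult.commute)
  then have "kept M X n (\<lambda>j. i j div M) = kept M Y n (\<lambda>j. i j div M)"
    using Suc.IH Suc.prems(1) by simp
  moreover have "X (Suc n) i = Y (Suc n) i" using Suc.prems by simp
  ultimately show ?case by simp
qed

lemma Cset_cong:
  assumes "\<And>m i. 1 \<le> m \<Longrightarrow> m \<le> n \<Longrightarrow> i \<in> grid_idx M m \<Longrightarrow> X m i = Y m i" and M: "M \<ge> 1"
  shows "Cset M X n = (Cset M Y n :: (real^'n::finite) set)"
proof -
  have "{i \<in> grid_idx M n. \<not> kept M X n i} = {i \<in> grid_idx M n. \<not> kept M Y n i}"
    using kept_cong[of n M X Y, OF assms(1) _ M] by blast
  then show ?thesis unfolding Cset_eq by simp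
qed

lemma Cset_sub_cong:
  assumes "\<And>m i. 1 \<le> m \<Longrightarrow> m \<le> n \<Longrightarrow> i \<in> grid_idx M m \<Longrightarrow> X m i = Y m i" and M: "M \<ge> 1"
  shows "Cset_sub M X n jj = (Cset_sub M Y n jj :: (real^'n::finite) set)"
proof -
  have "{i \<in> grid_idx M n. grid_cube M n i \<subseteq> grid_cube M 1 jj \<and> \<not> kept M X n i} =
        {i \<in> grid_idx M n. grid_cube M n i \<subseteq> grid_cube M 1 jj \<and> \<not> kept M Y n i}"
    using kept_cong[of n M X Y, OF assms(1) _ M] by blast
  then show ?thesis unfolding Cset_sub_eq by simp
qed

lemma EXP:
  fixes Pr :: "'a measure" and Y :: "'b \<Rightarrow> 'a \<Rightarrow> bool" and s :: "'c \<Rightarrow> 'b"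
    and g :: "('c \<Rightarrow> bool) \<Rightarrow> real"
  assumes P: "prob_space Pr"
    and meas: "\<And>y. Y y \<in> measurable Pr (count_space UNIV)"
    and indep: "prob_space.indep_vars Pr (\<lambda>_. count_space UNIV) Y Idx"
    and bern: "\<And>y. y \<in> Idx \<Longrightarrow> prob_space.prob Pr {\<omega> \<in> space Pr. Y y \<omega>} = p"
    and I: "finite I" "s ` I \<subseteq> Idx" "inj_on s I"
    and g: "\<And>\<sigma> \<tau>. (\<forall>x\<in>I. \<sigma> x = \<tau> x) \<Longrightarrow> g \<sigma> = g \<tau>"
  shows "prob_space.expectation Pr (\<lambda>\<omega>. g (\<lambda>x. Y (s x) \<omega>)) =
    (\<Sum>\<tau>\<in>PiE I (\<lambda>_. UNIV). g \<tau> * (\<Prod>x\<in>I. if \<tau> x then p else 1 - p))"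
proof -
  interpret prob_space Pr by (rule P)
  define E where "E = (\<lambda>\<tau>. {\<omega> \<in> space Pr. \<forall>x\<in>I. Y (s x) \<omega> = \<tau> x})"
  have ev1: "{\<omega> \<in> space Pr. Y y \<omega> = b} \<in> events" for y b
  proof -
    have "Y y -` {b} \<inter> space Pr \<in> events" using measurable_sets[OF meas[of y], of "{b}"] by simp
    moreover have "Y y -` {b} \<inter> space Pr = {\<omega> \<in> space Pr. Y y \<omega> = b}" by auto
    ultimately show ?thesis by simp
  qed
  have evE: "E \<tau> \<in> events" for \<tau>
    unfolding E_def by (rule sets.sets_Collect_finite_All[OF _ I(1)]) (rule ev1)
  have fP: "finite (PiE I (\<lambda>_::'c. UNIV :: bool set))" using I(1) by (simp add: finite_PiE)
  have pw: "g (\<lambda>x. Y (s x) \<omega>) = (\<Sum>\<tau>\<in>PiE I (\<lambda>_. UNIV). g \<tau> * indicator (E \<tau>) \<omega>)"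
    if \<omega>: "\<omega> \<in> space Pr" for \<omega>
  proof -
    define \<tau>0 where "\<tau>0 = restrict (\<lambda>x. Y (s x) \<omega>) I"
    have t0: "\<tau>0 \<in> PiE I (\<lambda>_. UNIV)" unfolding \<tau>0_def by simp
    have ind: "indicator (E \<tau>) \<omega> = (if \<tau> = \<tau>0 then 1 else (0::real))" if "\<tau> \<in> PiE I (\<lambda>_. UNIV)" for \<tau>
    proof -
      have "\<omega> \<in> E \<tau> \<longleftrightarrow> \<tau> = \<tau>0"
      proof
        assume "\<omega> \<in> E \<tau>"
        then have "\<forall>x\<in>I. Y (s x) \<omega> = \<tau> x" by (simp add: E_def)
        then show "\<tau> = \<tau>0" using that unfolding \<tau>0_def by (auto simp: PiE_iff extensional_def fun_eq_iff)
      next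
        assume "\<tau> = \<tau>0" then show "\<omega> \<in> E \<tau>" using \<omega> by (simp add: E_def \<tau>0_def)
      qed
      then show ?thesis by (simp add: indicator_def)
    qed
    have "(\<Sum>\<tau>\<in>PiE I (\<lambda>_. UNIV). g \<tau> * indicator (E \<tau>) \<omega>) = (\<Sum>\<tau>\<in>PiE I (\<lambda>_. UNIV). if \<tau> = \<tau>0 then g \<tau> else 0)"
      by (intro sum.cong refl) (simp add: ind)
    also have "\<dots> = g \<tau>0" using t0 fP by (simp add: sum.delta')
    also have "\<dots> = g (\<lambda>x. Y (s x) \<omega>)" by (rule g) (simp add: \<tau>0_def)
    finally show ?thesis by simp
  qed
  have "expectation (\<lambda>\<omega>. g (\<lambda>x. Y (s x) \<omega>)) = expectation (\<lambda>\<omega>. \<Sum>\<tau>\<in>PiE I (\<lambda>_. UNIV). g \<tau> * indicator (E \<tau>) \<omega>)"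
    by (rule Bochner_Integration.integral_cong) (simp_all add: pw)
  also have "\<dots> = (\<Sum>\<tau>\<in>PiE I (\<lambda>_. UNIV). expectation (\<lambda>\<omega>. g \<tau> * indicator (E \<tau>) \<omega>))"
    by (rule Bochner_Integration.integral_sum) (use evE in \<open>auto intro!: integrable_mult_right simp: integrable_indicator_iff sets.Int_space_eq2 emeasure_finite less_top[symmetric]\<close>)
  also have "\<dots> = (\<Sum>\<tau>\<in>PiE I (\<lambda>_. UNIV). g \<tau> * prob (E \<tau>))"
    using evE by (simp add: sets.Int_space_eq2)
  also have "\<dots> = (\<Sum>\<tau>\<in>PiE I (\<lambda>_. UNIV). g \<tau> * (\<Prod>x\<in>I. if \<tau> x then p else 1 - p))"
  proof (intro sum.cong refl arg_cong2[where f="(*)"])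
    fix \<tau> :: "'c \<Rightarrow> bool"
    have pr1: "prob {\<omega> \<in> space Pr. Y (s x) \<omega> = b} = (if b then p else 1 - p)" if x: "x \<in> I" for x b
    proof -
      have sx: "s x \<in> Idx" using I(2) x by auto
      show ?thesis
      proof (cases b)
        case True then show ?thesis using bern[OF sx] by simp
      next
        case False
        have "{\<omega> \<in> space Pr. Y (s x) \<omega> = b} = space Pr - {\<omega> \<in> space Pr. Y (s x) \<omega>}" using False by auto
        then show ?thesis using False prob_compl[OF ev1[of "s x" True]] bern[OF sx] by simp
      qed
    qed
    show "prob (E \<tau>) = (\<Prod>x\<in>I. if \<tau> x then p else 1 - p)"
    proof (cases "I = {}")
      case True
      then show ?thesis by (simp add: E_def prob_space)
    next
      case False
      define A where "A = (\<lambda>y. Y y -` {\<tau> (inv_into I s y)} \<inter> space Pr)"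
      have ind: "indep_sets (\<lambda>i. {Y i -` A \<inter> space Pr | A. A \<in> sets (count_space UNIV)}) Idx"
        using indep unfolding indep_vars_def2 by blast
      have "prob (\<Inter>y\<in>s ` I. A y) = (\<Prod>y\<in>s ` I. prob (A y))"
        by (rule indep_setsD[OF ind I(2)]) (use False I(1) in \<open>auto simp: A_def\<close>)
      moreover have "(\<Inter>y\<in>s ` I. A y) = E \<tau>"
        using False I(3) by (auto simp: A_def E_def)
      moreover have "(\<Prod>y\<in>s ` I. prob (A y)) = (\<Prod>x\<in>I. prob (A (s x)))"
        by (rule prod.reindex[OF I(3), unfolded comp_def])
      moreover have "prob (A (s x)) = (if \<tau> x then p else 1 - p)" if "x \<in> I" for x
      proof -
        have "A (s x) = {\<omega> \<in> space Pr. Y (s x) \<omega> = \<tau> x}" using that I(3) by (auto simp: A_def)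
        then show ?thesis using pr1[OF that] by simp
      qed
      ultimately show ?thesis by simp
    qed
  qed
  finally show ?thesis .
qed

definition W :: "real \<Rightarrow> 'c set \<Rightarrow> ('c \<Rightarrow> bool) \<Rightarrow> real" where
  "W p I \<tau> = (\<Prod>x\<in>I. if \<tau> x then p else 1 - p)"

lemma W_sum1: "finite I \<Longrightarrow> (\<Sum>\<tau>\<in>PiE I (\<lambda>_. UNIV). W p I \<tau>) = 1"
proof -
  assume I: "finite I"
  have "(\<Sum>\<tau>\<in>PiE I (\<lambda>_. UNIV). W p I \<tau>) = (\<Prod>x\<in>I. \<Sum>b\<in>(UNIV::bool set). if b then p else 1 - p)"
    unfolding W_def by (rule prod_sum_PiE[symmetric]) (use I in auto)
  also have "\<dots> = 1" by (simp add: UNIV_bool)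
  finally show ?thesis .
qed

lemma W_nonneg: "0 \<le> p \<Longrightarrow> p \<le> 1 \<Longrightarrow> 0 \<le> W p I \<tau>"
  unfolding W_def by (intro prod_nonneg) auto

lemma W_insert: "finite I \<Longrightarrow> x \<notin> I \<Longrightarrow> W p (insert x I) (\<tau>(x := b)) = (if b then p else 1 - p) * W p I \<tau>"
proof -
  assume I: "finite I" and x: "x \<notin> I"
  have "(\<Prod>y\<in>I. if (\<tau>(x := b)) y then p else 1 - p) = (\<Prod>y\<in>I. if \<tau> y then p else 1 - p)"
    using x by (intro prod.cong refl) auto
  then show ?thesis unfolding W_def using I x by (simp add: prod.insert)
qed

lemma sum_PiE_insert:
  assumes "finite I" "x \<notin> I"
  shows "(\<Sum>\<tau>\<in>PiE (insert x I) (\<lambda>_. UNIV::bool set). f \<tau>) =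
         (\<Sum>b\<in>(UNIV::bool set). \<Sum>\<tau>\<in>PiE I (\<lambda>_. UNIV). f (\<tau>(x := b)))"
proof -
  have "(\<Sum>\<tau>\<in>PiE (insert x I) (\<lambda>_. UNIV::bool set). f \<tau>) =
        (\<Sum>\<tau>\<in>(\<lambda>(y, g). g(x := y)) ` (UNIV \<times> PiE I (\<lambda>_. UNIV::bool set)). f \<tau>)"
    by (simp add: PiE_insert_eq)
  also have "\<dots> = (\<Sum>z\<in>UNIV \<times> PiE I (\<lambda>_. UNIV::bool set). f ((\<lambda>(y, g). g(x := y)) z))"
    by (rule sum.reindex[unfolded comp_def]) (use inj_combinator[OF assms(2), of "\<lambda>_. UNIV"] in simp)
  also have "\<dots> = (\<Sum>b\<in>(UNIV::bool set). \<Sum>\<tau>\<in>PiE I (\<lambda>_. UNIV). f (\<tau>(x := b)))"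
    unfolding sum.cartesian_product by (simp add: case_prod_beta)
  finally show ?thesis .
qed

lemma split_T:
  assumes G: "finite G"
  shows "(\<Sum>T | T \<subseteq> G \<and> T \<noteq> {}. f T) = (\<Sum>j\<in>G. f {j}) + (\<Sum>T\<in>{T. T \<subseteq> G \<and> 2 \<le> card T}. f T)"
proof -
  have eq: "{T. T \<subseteq> G \<and> T \<noteq> {}} = (\<lambda>j. {j}) ` G \<union> {T. T \<subseteq> G \<and> 2 \<le> card T}"
  proof (intro set_eqI iffI)
    fix T assume T: "T \<in> {T. T \<subseteq> G \<and> T \<noteq> {}}"
    then have fT: "finite T" using G finite_subset by auto
    show "T \<in> (\<lambda>j. {j}) ` G \<union> {T. T \<subseteq> G \<and> 2 \<le> card T}"
    proof (cases "card T = 1")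
      case True
      then obtain j where "T = {j}" by (rule card_1_singletonE)
      then show ?thesis using T by auto
    next
      case False
      then have "2 \<le> card T" using T fT card_0_eq[OF fT] by (cases "card T") auto
      then show ?thesis using T by auto
    qed
  next
    fix T assume "T \<in> (\<lambda>j. {j}) ` G \<union> {T. T \<subseteq> G \<and> 2 \<le> card T}"
    then show "T \<in> {T. T \<subseteq> G \<and> T \<noteq> {}}" by auto
  qed
  have disj: "(\<lambda>j. {j}) ` G \<inter> {T. T \<subseteq> G \<and> 2 \<le> card T} = {}" by auto
  have f1: "finite ((\<lambda>j. {j}) ` G)" "finite {T. T \<subseteq> G \<and> 2 \<le> card T}" using G by auto
  show ?thesis unfolding eq
    by (subst sum.union_disjoint[OF f1 disj]) (simp add: sum.reindex inj_on_def)
qed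

definition Yv :: "(nat \<Rightarrow> ('n \<Rightarrow> nat) \<Rightarrow> 'a \<Rightarrow> bool) \<Rightarrow> nat \<times> ('n \<Rightarrow> nat) \<Rightarrow> 'a \<Rightarrow> bool" where
  "Yv X = (\<lambda>(n, i). X n i)"

definition Idx :: "nat \<Rightarrow> (nat \<times> ('n \<Rightarrow> nat)) set" where
  "Idx M = {(n, i). n \<ge> 1 \<and> i \<in> grid_idx M n}"

definition Ilev :: "nat \<Rightarrow> nat \<Rightarrow> (nat \<times> ('n \<Rightarrow> nat)) set" where
  "Ilev M n = {(m, i). 1 \<le> m \<and> m \<le> n \<and> i \<in> grid_idx M m}"

definition Xof :: "(nat \<times> ('n \<Rightarrow> nat) \<Rightarrow> bool) \<Rightarrow> nat \<Rightarrow> ('n \<Rightarrow> nat) \<Rightarrow> bool" where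
  "Xof \<sigma> = (\<lambda>m i. \<sigma> (m, i))"

locale fp =
  fixes Pr :: "'a measure"
    and X :: "nat \<Rightarrow> ('n::finite \<Rightarrow> nat) \<Rightarrow> 'a \<Rightarrow> bool"
    and M :: nat and p :: real and k :: nat
  assumes P: "prob_space Pr"
    and M2: "M \<ge> 2"
    and p: "1 / real M < p" "p \<le> 1"
    and meas: "\<And>n i. X n i \<in> measurable Pr (count_space UNIV)"
    and indep: "prob_space.indep_vars Pr (\<lambda>_. count_space UNIV) (\<lambda>(n, i). X n i)
                  {(n, i). n \<ge> 1 \<and> i \<in> grid_idx M n}"
    and bern: "\<And>n i. n \<ge> 1 \<Longrightarrow> i \<in> grid_idx M n \<Longrightarrow> prob_space.prob Pr {\<omega> \<in> space Pr. X n i \<omega>} = p"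
begin

sublocale prob_space Pr by (rule P)

abbreviation IL :: "nat \<Rightarrow> (nat \<times> ('n \<Rightarrow> nat)) set" where
  "IL n \<equiv> Ilev M n"

lemma M1: "M \<ge> 1" using M2 by simp

lemma p01: "0 \<le> p" "p \<le> 1"
proof -
  have "0 < 1 / real M" using M2 by simp
  then show "0 \<le> p" using p(1) by linarith
  show "p \<le> 1" by (rule p(2))
qed

lemma finite_Ilev: "finite (Ilev M n :: (nat \<times> ('n \<Rightarrow> nat)) set)"
proof -
  have "Ilev M n \<subseteq> (SIGMA m:{1..n}. (grid_idx M m :: ('n \<Rightarrow> nat) set))" unfolding Ilev_def by auto
  moreover have "finite (SIGMA m:{1..n}. (grid_idx M m :: ('n \<Rightarrow> nat) set))" by (intro finite_SigmaI finite_atLeastAtMost finite_grid_idx[OF M1])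
  ultimately show ?thesis by (rule finite_subset)
qed

lemma Ilev_Idx: "(Ilev M n :: (nat \<times> ('n \<Rightarrow> nat)) set) \<subseteq> Idx M" unfolding Ilev_def Idx_def by auto

lemma meas_Y: "Yv X y \<in> measurable Pr (count_space UNIV)"
  unfolding Yv_def by (cases y) (simp add: meas)

lemma indep_Y: "indep_vars (\<lambda>_. count_space UNIV) (Yv X) (Idx M)"
  using indep unfolding Yv_def Idx_def .

lemma bern_Y: "y \<in> Idx M \<Longrightarrow> prob {\<omega> \<in> space Pr. Yv X y \<omega>} = p"
  unfolding Yv_def Idx_def by (cases y) (auto intro: bern)

lemma EXPg:
  assumes I: "finite I" "s ` I \<subseteq> (Idx M)" "inj_on s I"
    and g: "\<And>\<sigma> \<tau>. (\<forall>x\<in>I. \<sigma> x = \<tau> x) \<Longrightarrow> g \<sigma> = g \<tau>"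
  shows "expectation (\<lambda>\<omega>. g (\<lambda>x. Yv X (s x) \<omega>)) = (\<Sum>\<tau>\<in>PiE I (\<lambda>_. UNIV). g \<tau> * W p I \<tau>)"
  unfolding W_def by (rule EXP[OF P meas_Y indep_Y bern_Y I g])

lemma Xof_Y: "Xof (\<lambda>x. Yv X x \<omega>) = (\<lambda>m i. X m i \<omega>)"
  unfolding Xof_def Yv_def by simp

lemma dep_Cset: "\<forall>x\<in>(Ilev M n :: (nat \<times> ('n \<Rightarrow> nat)) set). \<sigma> x = \<tau> x \<Longrightarrow> Cset M (Xof \<sigma>) n = (Cset M (Xof \<tau>) n :: (real^'n) set)"
  by (rule Cset_cong[OF _ M1]) (auto simp: Xof_def Ilev_def)

lemma dep_Cset_sub: "\<forall>x\<in>(Ilev M n :: (nat \<times> ('n \<Rightarrow> nat)) set). \<sigma> x = \<tau> x \<Longrightarrow> Cset_sub M (Xof \<sigma>) n jj = (Cset_sub M (Xof \<tau>) n jj :: (real^'n) set)"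
  by (rule Cset_sub_cong[OF _ M1]) (auto simp: Xof_def Ilev_def)

lemma EXP_lev:
  assumes g: "\<And>\<sigma> \<tau>. (\<forall>x\<in>(Ilev M n :: (nat \<times> ('n \<Rightarrow> nat)) set). \<sigma> x = \<tau> x) \<Longrightarrow> G (Xof \<sigma>) = G (Xof \<tau>)"
  shows "expectation (\<lambda>\<omega>. G (\<lambda>m i. X m i \<omega>)) = (\<Sum>\<tau>\<in>PiE (Ilev M n) (\<lambda>_. UNIV). G (Xof \<tau>) * W p (Ilev M n) \<tau>)"
proof -
  have "expectation (\<lambda>\<omega>. G (\<lambda>m i. X m i \<omega>)) = expectation (\<lambda>\<omega>. (\<lambda>\<sigma>. G (Xof \<sigma>)) (\<lambda>x. Yv X (id x) \<omega>))"
    by (simp add: Xof_Y)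
  also have "\<dots> = (\<Sum>\<tau>\<in>PiE (Ilev M n) (\<lambda>_. UNIV). G (Xof \<tau>) * W p (Ilev M n) \<tau>)"
    by (rule EXPg[OF finite_Ilev]) (use Ilev_Idx g in auto)
  finally show ?thesis .
qed

lemma IE_point:
  fixes Z :: "nat \<Rightarrow> ('n \<Rightarrow> nat) \<Rightarrow> bool"
  shows "intrinsic_volume k (Cset M Z (Suc m) :: (real^'n) set) =
    (\<Sum>jj\<in>grid_idx M 1. intrinsic_volume k (Cset_sub M Z (Suc m) jj :: (real^'n) set)) +
    (\<Sum>T\<in>{T. T \<subseteq> grid_idx M 1 \<and> 2 \<le> card T}. (-1) ^ (card T + 1) *
        intrinsic_volume k (\<Inter>jj\<in>T. Cset_sub M Z (Suc m) jj :: (real^'n) set))"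
proof -
  have G: "\<And>j::'n. finite (ugrid M (Suc m))" by (rule finite_ugrid)
  have J: "finite (grid_idx M 1 :: ('n \<Rightarrow> nat) set)" by (rule finite_grid_idx[OF M1])
  have "intrinsic_volume k (Cset M Z (Suc m) :: (real^'n) set) =
      intrinsic_volume k (\<Union>jj\<in>grid_idx M 1. Cset_sub M Z (Suc m) jj :: (real^'n) set)"
    by (simp add: Cset_decomp[OF M1])
  also have "\<dots> = (\<Sum>T | T \<subseteq> grid_idx M 1 \<and> T \<noteq> {}. (- 1) ^ (card T + 1) *
        intrinsic_volume k (\<Inter>jj\<in>T. Cset_sub M Z (Suc m) jj :: (real^'n) set))"
    by (rule V_IE[of "\<lambda>_. ugrid M (Suc m)", OF G J]) (rule pbox_Cset_sub[OF M1])
  also have "\<dots> = (\<Sum>jj\<in>grid_idx M 1. (- 1) ^ (card {jj} + 1) *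
        intrinsic_volume k (\<Inter>jj'\<in>{jj}. Cset_sub M Z (Suc m) jj' :: (real^'n) set)) +
    (\<Sum>T\<in>{T. T \<subseteq> grid_idx M 1 \<and> 2 \<le> card T}. (-1) ^ (card T + 1) *
        intrinsic_volume k (\<Inter>jj\<in>T. Cset_sub M Z (Suc m) jj :: (real^'n) set))"
    by (rule split_T[OF J])
  finally show ?thesis by simp
qed

lemma rec1:
  assumes jj: "jj \<in> grid_idx M 1"
  shows "expectation (\<lambda>\<omega>. intrinsic_volume k (Cset_sub M (\<lambda>m i. X m i \<omega>) (Suc m) jj :: (real^'n) set)) =
    (1 / real M) ^ k * ((1 - p) * intrinsic_volume k (cbox (0::real^'n) 1) +
       p * expectation (\<lambda>\<omega>. intrinsic_volume k (Cset M (\<lambda>m i. X m i \<omega>) m :: (real^'n) set)))"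
proof -
  define x0 where "x0 = (0::nat, jj)"
  define I' where "I' = insert x0 (IL m)"
  define s' where "s' = (\<lambda>(m'::nat, i::'n \<Rightarrow> nat). if m' = 0 then (1::nat, jj) else (Suc m', sh M jj m' i))"
  define q where "q = intrinsic_volume k (cbox (0::real^'n) 1)"
  define g where "g = (\<lambda>\<tau>. (1 / real M) ^ k *
     (if \<tau> x0 then intrinsic_volume k (Cset M (Xof \<tau>) m :: (real^'n) set) else q))"
  have x0I: "x0 \<notin> IL m" by (simp add: x0_def Ilev_def)
  have finI: "finite I'" by (simp add: I'_def finite_Ilev)
  have step_a: "intrinsic_volume k (Cset_sub M (\<lambda>m i. X m i \<omega>) (Suc m) jj :: (real^'n) set) =
      g (\<lambda>x. Yv X (s' x) \<omega>)" for \<omega>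
  proof -
    have y0: "Yv X (s' x0) \<omega> = X 1 jj \<omega>" by (simp add: Yv_def s'_def x0_def)
    have cs: "Cset M (Xs M (\<lambda>m i. X m i \<omega>) jj) m = (Cset M (Xof (\<lambda>x. Yv X (s' x) \<omega>)) m :: (real^'n) set)"
      by (rule Cset_cong[OF _ M1]) (auto simp: Xs_def Xof_def Yv_def s'_def sh_def)
    show ?thesis unfolding V_Cset_sub[OF M1 jj] g_def y0 cs q_def by simp
  qed
  have sI: "s' ` I' \<subseteq> Idx M"
  proof
    fix y assume "y \<in> s' ` I'"
    then obtain x where x: "x \<in> I'" "y = s' x" by blast
    show "y \<in> Idx M"
    proof (cases "x = x0")
      case True then show ?thesis using x jj by (simp add: s'_def x0_def Idx_def)
    next
      case False
      then obtain m' i where mi: "x = (m', i)" "1 \<le> m'" "m' \<le> m" "i \<in> grid_idx M m'"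
        using x(1) by (auto simp: I'_def Ilev_def)
      then show ?thesis using x sh_idx(1)[OF M1 jj mi(4)] by (simp add: s'_def Idx_def)
    qed
  qed
  have inj: "inj_on s' I'"
  proof (rule inj_onI)
    fix x y assume x: "x \<in> I'" and y: "y \<in> I'" and e: "s' x = s' y"
    show "x = y"
    proof (cases "x = x0"; cases "y = x0")
      assume "x = x0" "y = x0" then show ?thesis by simp
    next
      assume a: "x = x0" "y \<noteq> x0"
      then obtain m' i where "y = (m', i)" "1 \<le> m'" using y by (auto simp: I'_def Ilev_def)
      then show ?thesis using a e by (simp add: s'_def x0_def)
    next
      assume a: "x \<noteq> x0" "y = x0"
      then obtain m' i where "x = (m', i)" "1 \<le> m'" using x by (auto simp: I'_def Ilev_def)
      then show ?thesis using a e by (simp add: s'_def x0_def)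
    next
      assume a: "x \<noteq> x0" "y \<noteq> x0"
      obtain m1 i1 where 1: "x = (m1, i1)" "1 \<le> m1" "i1 \<in> grid_idx M m1" using x a by (auto simp: I'_def Ilev_def)
      obtain m2 i2 where 2: "y = (m2, i2)" "1 \<le> m2" "i2 \<in> grid_idx M m2" using y a by (auto simp: I'_def Ilev_def)
      have m12: "m1 = m2" and sh12: "sh M jj m1 i1 = sh M jj m2 i2" using e 1 2 by (auto simp: s'_def)
      have "i1 = i2"
      proof
        fix l
        have "i1 l = sh M jj m1 i1 l mod M^m1" using sh_idx(3)[OF M1 jj 1(3)] by simp
        also have "\<dots> = sh M jj m2 i2 l mod M^m2" using sh12 m12 by simp
        also have "\<dots> = i2 l" using sh_idx(3)[OF M1 jj 2(3)] by simp
        finally show "i1 l = i2 l" .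
      qed
      then show ?thesis using 1 2 m12 by simp
    qed
  qed
  have gdep: "g \<sigma> = g \<tau>" if "\<forall>x\<in>I'. \<sigma> x = \<tau> x" for \<sigma> \<tau>
  proof -
    have "\<sigma> x0 = \<tau> x0" using that by (simp add: I'_def)
    moreover have "Cset M (Xof \<sigma>) m = (Cset M (Xof \<tau>) m :: (real^'n) set)"
      by (rule dep_Cset) (use that in \<open>simp add: I'_def\<close>)
    ultimately show ?thesis by (simp add: g_def)
  qed
  have "expectation (\<lambda>\<omega>. intrinsic_volume k (Cset_sub M (\<lambda>m i. X m i \<omega>) (Suc m) jj :: (real^'n) set)) =
      expectation (\<lambda>\<omega>. g (\<lambda>x. Yv X (s' x) \<omega>))"
    by (simp add: step_a)
  also have "\<dots> = (\<Sum>\<tau>\<in>PiE I' (\<lambda>_. UNIV). g \<tau> * W p I' \<tau>)"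
    by (rule EXPg[OF finI sI inj gdep])
  also have "\<dots> = (\<Sum>b\<in>(UNIV::bool set). \<Sum>\<tau>\<in>PiE (IL m) (\<lambda>_. UNIV). g (\<tau>(x0 := b)) * W p I' (\<tau>(x0 := b)))"
    unfolding I'_def by (rule sum_PiE_insert[OF finite_Ilev x0I])
  also have "\<dots> = (\<Sum>b\<in>(UNIV::bool set). \<Sum>\<tau>\<in>PiE (IL m) (\<lambda>_. UNIV).
       (1 / real M) ^ k * (if b then intrinsic_volume k (Cset M (Xof \<tau>) m :: (real^'n) set) else q) *
       ((if b then p else 1 - p) * W p (IL m) \<tau>))"
  proof (intro sum.cong refl)
    fix b \<tau> assume "\<tau> \<in> PiE (IL m) (\<lambda>_. UNIV :: bool set)"
    have dc: "Cset M (Xof (\<tau>(x0 := b'))) m = (Cset M (Xof \<tau>) m :: (real^'n) set)" for b'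
      by (rule dep_Cset) (use x0I in auto)
    then show "g (\<tau>(x0 := b)) * W p I' (\<tau>(x0 := b)) =
       (1 / real M) ^ k * (if b then intrinsic_volume k (Cset M (Xof \<tau>) m :: (real^'n) set) else q) *
       ((if b then p else 1 - p) * W p (IL m) \<tau>)"
      unfolding I'_def W_insert[OF finite_Ilev x0I] g_def using dc[of b] by simp
  qed
  also have "\<dots> = (1 / real M) ^ k * (p * (\<Sum>\<tau>\<in>PiE (IL m) (\<lambda>_. UNIV).
        intrinsic_volume k (Cset M (Xof \<tau>) m :: (real^'n) set) * W p (IL m) \<tau>) +
        (1 - p) * q * (\<Sum>\<tau>\<in>PiE (IL m) (\<lambda>_. UNIV). W p (IL m) \<tau>))"
    by (simp add: UNIV_bool sum_distrib_left sum.distrib algebra_simps)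
  also have "\<dots> = (1 / real M) ^ k * (p * expectation (\<lambda>\<omega>. intrinsic_volume k (Cset M (\<lambda>m i. X m i \<omega>) m :: (real^'n) set)) +
        (1 - p) * q)"
  proof -
    have e: "expectation (\<lambda>\<omega>. intrinsic_volume k (Cset M (\<lambda>m i. X m i \<omega>) m :: (real^'n) set)) =
      (\<Sum>\<tau>\<in>PiE (IL m) (\<lambda>_. UNIV). intrinsic_volume k (Cset M (Xof \<tau>) m :: (real^'n) set) * W p (IL m) \<tau>)"
      by (rule EXP_lev) (metis dep_Cset)
    have w: "(\<Sum>\<tau>\<in>PiE (IL m) (\<lambda>_. UNIV). W p (IL m) \<tau>) = 1" by (rule W_sum1[OF finite_Ilev])
    show ?thesis unfolding e w by simp
  qed
  finally show ?thesis unfolding q_def by (simp add: algebra_simps)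
qed

lemma V_empty: "intrinsic_volume k ({} :: (real^'n) set) = 0"
  using intrinsic_volume_ie[of "{}" k] by (simp add: ie_def)

lemma a0: "expectation (\<lambda>\<omega>. intrinsic_volume k (Cset M (\<lambda>m i. X m i \<omega>) 0 :: (real^'n) set)) = 0"
  by (simp add: Cset_0 V_empty)

lemma dep_Inter: "\<forall>x\<in>IL n. \<sigma> x = \<tau> x \<Longrightarrow>
  (\<Inter>jj\<in>T. Cset_sub M (Xof \<sigma>) n jj :: (real^'n) set) = (\<Inter>jj\<in>T. Cset_sub M (Xof \<tau>) n jj)"
  using dep_Cset_sub by (metis (no_types, lifting))

lemma a_Suc:
  "expectation (\<lambda>\<omega>. intrinsic_volume k (Cset M (\<lambda>m i. X m i \<omega>) (Suc m) :: (real^'n) set)) =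
    (\<Sum>jj\<in>grid_idx M 1. expectation (\<lambda>\<omega>. intrinsic_volume k (Cset_sub M (\<lambda>m i. X m i \<omega>) (Suc m) jj :: (real^'n) set))) +
    (\<Sum>T\<in>{T. T \<subseteq> grid_idx M 1 \<and> 2 \<le> card T}. (-1) ^ (card T + 1) *
        expectation (\<lambda>\<omega>. intrinsic_volume k (\<Inter>jj\<in>T. Cset_sub M (\<lambda>m i. X m i \<omega>) (Suc m) jj :: (real^'n) set)))"
proof -
  let ?P = "PiE (IL (Suc m)) (\<lambda>_. UNIV :: bool set)"
  let ?W = "W p (IL (Suc m))"
  let ?TT = "{T. T \<subseteq> (grid_idx M 1 :: ('n \<Rightarrow> nat) set) \<and> 2 \<le> card T}"
  have e1: "expectation (\<lambda>\<omega>. intrinsic_volume k (Cset M (\<lambda>m i. X m i \<omega>) (Suc m) :: (real^'n) set)) =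
     (\<Sum>\<tau>\<in>?P. intrinsic_volume k (Cset M (Xof \<tau>) (Suc m) :: (real^'n) set) * ?W \<tau>)"
    by (rule EXP_lev) (metis dep_Cset)
  have e2: "expectation (\<lambda>\<omega>. intrinsic_volume k (Cset_sub M (\<lambda>m i. X m i \<omega>) (Suc m) jj :: (real^'n) set)) =
     (\<Sum>\<tau>\<in>?P. intrinsic_volume k (Cset_sub M (Xof \<tau>) (Suc m) jj :: (real^'n) set) * ?W \<tau>)" for jj
    by (rule EXP_lev) (metis dep_Cset_sub)
  have e3: "expectation (\<lambda>\<omega>. intrinsic_volume k (\<Inter>jj\<in>T. Cset_sub M (\<lambda>m i. X m i \<omega>) (Suc m) jj :: (real^'n) set)) =
     (\<Sum>\<tau>\<in>?P. intrinsic_volume k (\<Inter>jj\<in>T. Cset_sub M (Xof \<tau>) (Suc m) jj :: (real^'n) set) * ?W \<tau>)" for T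
    by (rule EXP_lev) (metis dep_Inter)
  have "(\<Sum>\<tau>\<in>?P. intrinsic_volume k (Cset M (Xof \<tau>) (Suc m) :: (real^'n) set) * ?W \<tau>) =
     (\<Sum>\<tau>\<in>?P. (\<Sum>jj\<in>grid_idx M 1. intrinsic_volume k (Cset_sub M (Xof \<tau>) (Suc m) jj :: (real^'n) set) * ?W \<tau>) +
       (\<Sum>T\<in>?TT. (-1) ^ (card T + 1) * (intrinsic_volume k (\<Inter>jj\<in>T. Cset_sub M (Xof \<tau>) (Suc m) jj :: (real^'n) set) * ?W \<tau>)))"
    by (intro sum.cong refl) (simp only: IE_point distrib_right sum_distrib_right mult.assoc)
  also have "\<dots> = (\<Sum>jj\<in>grid_idx M 1. \<Sum>\<tau>\<in>?P. intrinsic_volume k (Cset_sub M (Xof \<tau>) (Suc m) jj :: (real^'n) set) * ?W \<tau>) +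
       (\<Sum>T\<in>?TT. (-1) ^ (card T + 1) * (\<Sum>\<tau>\<in>?P. intrinsic_volume k (\<Inter>jj\<in>T. Cset_sub M (Xof \<tau>) (Suc m) jj :: (real^'n) set) * ?W \<tau>))"
    by (simp add: sum.distrib sum_distrib_left) (rule arg_cong2[where f="(+)"]; rule sum.swap)
  finally show ?thesis unfolding e1 e2 e3 .
qed

lemma bound_c:
  assumes T: "T \<subseteq> grid_idx M 1" "2 \<le> card T"
  shows "\<bar>expectation (\<lambda>\<omega>. intrinsic_volume k (\<Inter>jj\<in>T. Cset_sub M (\<lambda>m i. X m i \<omega>) n jj :: (real^'n) set))\<bar>
     \<le> card {S::'n set. card S = k} * (CARD('n) * M) * (1 / real M ^ n) ^ k * (2 * (M^n + 1)) ^ (CARD('n) - 1)"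
    (is "_ \<le> ?B")
proof -
  have pt: "\<bar>intrinsic_volume k (\<Inter>jj\<in>T. Cset_sub M Z n jj :: (real^'n) set)\<bar> \<le> ?B"
    for Z :: "nat \<Rightarrow> ('n \<Rightarrow> nat) \<Rightarrow> bool"
  proof -
    have fT: "finite T" using T(1) finite_subset finite_grid_idx[OF M1] by blast
    have neT: "T \<noteq> {}" using T(2) by auto
    have G: "\<And>j::'n. finite (ugrid M n)" by (rule finite_ugrid)
    have pb: "pbox (\<lambda>_::'n. ugrid M n) (\<Inter>jj\<in>T. Cset_sub M Z n jj)"
      by (rule pbox_INT[OF fT neT]) (rule pbox_Cset_sub[OF M1])
    have "\<bar>intrinsic_volume k (\<Inter>jj\<in>T. Cset_sub M Z n jj :: (real^'n) set)\<bar> \<le>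
        card {S::'n set. card S = k} * (1 / real M ^ n) ^ k *
            (CARD('n) * card (Pset M) * (2 * (M^n + 1)) ^ (CARD('n) - 1))"
      by (rule V_bound[OF G pb inter_H[OF M1 T] finite_Pset])
        (use ugrid_len[OF M1] card_ugrid[of M n] in auto)
    also have "\<dots> \<le> ?B"
    proof -
      have "real (CARD('n) * card (Pset M) * (2 * (M^n + 1)) ^ (CARD('n) - 1)) \<le>
            real (CARD('n) * M * (2 * (M^n + 1)) ^ (CARD('n) - 1))"
        using card_Pset[of M] by (intro of_nat_mono mult_right_mono mult_left_mono) auto
      then have "real (CARD('n) * card (Pset M) * (2 * (M^n + 1)) ^ (CARD('n) - 1)) * (card {S::'n set. card S = k} * (1 / real M ^ n) ^ k)
          \<le> real (CARD('n) * M * (2 * (M^n + 1)) ^ (CARD('n) - 1)) * (card {S::'n set. card S = k} * (1 / real M ^ n) ^ k)"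
        by (rule mult_right_mono) simp
      then show ?thesis by (simp add: mult_ac)
    qed
    finally show ?thesis .
  qed
  have B0: "0 \<le> ?B" by simp
  have eqE: "expectation (\<lambda>\<omega>. intrinsic_volume k (\<Inter>jj\<in>T. Cset_sub M (\<lambda>m i. X m i \<omega>) n jj :: (real^'n) set)) =
     (\<Sum>\<tau>\<in>PiE (IL n) (\<lambda>_. UNIV). intrinsic_volume k (\<Inter>jj\<in>T. Cset_sub M (Xof \<tau>) n jj :: (real^'n) set) * W p (IL n) \<tau>)"
    by (rule EXP_lev) (metis dep_Inter)
  have "\<bar>\<Sum>\<tau>\<in>PiE (IL n) (\<lambda>_. UNIV). intrinsic_volume k (\<Inter>jj\<in>T. Cset_sub M (Xof \<tau>) n jj :: (real^'n) set) * W p (IL n) \<tau>\<bar>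
      \<le> (\<Sum>\<tau>\<in>PiE (IL n) (\<lambda>_. UNIV). ?B * W p (IL n) \<tau>)"
  proof -
    have "\<bar>\<Sum>\<tau>\<in>PiE (IL n) (\<lambda>_. UNIV). intrinsic_volume k (\<Inter>jj\<in>T. Cset_sub M (Xof \<tau>) n jj :: (real^'n) set) * W p (IL n) \<tau>\<bar>
        \<le> (\<Sum>\<tau>\<in>PiE (IL n) (\<lambda>_. UNIV). \<bar>intrinsic_volume k (\<Inter>jj\<in>T. Cset_sub M (Xof \<tau>) n jj :: (real^'n) set) * W p (IL n) \<tau>\<bar>)"
      by (rule sum_abs)
    also have "\<dots> \<le> (\<Sum>\<tau>\<in>PiE (IL n) (\<lambda>_. UNIV). ?B * W p (IL n) \<tau>)"
    proof (rule sum_mono)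
      fix \<tau> :: "nat \<times> ('n \<Rightarrow> nat) \<Rightarrow> bool"
      have w: "0 \<le> W p (IL n) \<tau>" by (rule W_nonneg[OF p01])
      show "\<bar>intrinsic_volume k (\<Inter>jj\<in>T. Cset_sub M (Xof \<tau>) n jj :: (real^'n) set) * W p (IL n) \<tau>\<bar> \<le> ?B * W p (IL n) \<tau>"
      proof -
        have "\<bar>intrinsic_volume k (\<Inter>jj\<in>T. Cset_sub M (Xof \<tau>) n jj :: (real^'n) set) * W p (IL n) \<tau>\<bar> =
          \<bar>intrinsic_volume k (\<Inter>jj\<in>T. Cset_sub M (Xof \<tau>) n jj :: (real^'n) set)\<bar> * W p (IL n) \<tau>"
          using w by (simp add: abs_mult)
        also have "\<dots> \<le> ?B * W p (IL n) \<tau>" by (rule mult_right_mono[OF pt w])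
        finally show ?thesis .
      qed
    qed
    finally show ?thesis .
  qed
  also have "\<dots> = ?B * (\<Sum>\<tau>\<in>PiE (IL n) (\<lambda>_. UNIV). W p (IL n) \<tau>)" by (simp only: sum_distrib_left)
  also have "\<dots> = ?B" by (simp only: W_sum1[OF finite_Ilev] mult_1_right)
  finally show ?thesis unfolding eqE .
qed

end

lemma powr_rho:
  fixes M :: nat and p :: real and d k :: nat and D r :: real
  assumes M: "M \<ge> 2" and p: "0 < p"
    and D: "D = ln (real M ^ d * p) / ln (real M)" and r: "r = 1 / real M"
  shows "r powr (real n * (D - real k)) = (real M ^ k / (real M ^ d * p)) ^ n"
proof -
  have Mp: "real M > 1" using M by simp
  have lnM: "ln (real M) > 0" using Mp by simp
  have pos: "real M ^ d * p > 0" "real M ^ k > 0" using Mp p by auto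
  define \<rho> where "\<rho> = real M ^ k / (real M ^ d * p)"
  have rho: "\<rho> > 0" using pos by (simp add: \<rho>_def)
  have DM: "D * ln (real M) = ln (real M ^ d * p)" using lnM by (simp add: D)
  have lnr: "ln r = - ln (real M)" using Mp by (simp add: r ln_div)
  have lnrho: "ln \<rho> = real k * ln (real M) - ln (real M ^ d * p)"
    using pos Mp p by (simp add: \<rho>_def ln_div ln_realpow)
  have "r powr (real n * (D - real k)) = exp (real n * (D - real k) * ln r)"
    using Mp by (simp add: powr_def r)
  also have "\<dots> = exp (real n * ln \<rho>)"
  proof -
    have "real n * (D - real k) * ln r = real n * (real k * ln (real M) - D * ln (real M))"
      by (simp add: lnr algebra_simps)
    then show ?thesis unfolding DM lnrho by simp
  qed
  also have "\<dots> = \<rho> ^ n" using rho by (simp add: exp_of_nat_mult)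
  finally show ?thesis by (simp add: \<rho>_def)
qed

theorem theorem5p1:
  fixes Pr :: "'a measure"
    and X :: "nat \<Rightarrow> ('n::finite \<Rightarrow> nat) \<Rightarrow> 'a \<Rightarrow> bool"
    and M :: nat and p :: real and k :: nat
  defines "d \<equiv> CARD('n)"
  defines "D \<equiv> ln (real M ^ d * p) / ln (real M)"
  defines "r \<equiv> 1 / real M"
  assumes P: "prob_space Pr"
    and M2: "M \<ge> 2"
    and p: "1 / real M < p" "p \<le> 1"
    and meas: "\<And>n i. X n i \<in> measurable Pr (count_space UNIV)"
    and indep: "prob_space.indep_vars Pr (\<lambda>_. count_space UNIV) (\<lambda>(n, i). X n i)
                  {(n, i). n \<ge> 1 \<and> i \<in> grid_idx M n}"
    and bern: "\<And>n i. n \<ge> 1 \<Longrightarrow> i \<in> grid_idx M n \<Longrightarrow> prob_space.prob Pr {\<omega> \<in> space Pr. X n i \<omega>} = p"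
    and k: "k \<le> d" "real k < D"
  shows
    "(\<forall>T. T \<subseteq> grid_idx M 1 \<and> card T \<ge> 2 \<longrightarrow>
        summable (\<lambda>n. r powr (real (Suc n) * (D - real k)) *
          prob_space.expectation Pr (\<lambda>\<omega>. intrinsic_volume k
             (\<Inter>jj\<in>T. Cset_sub M (\<lambda>m i. X m i \<omega>) (Suc n) jj)))) \<and>
     (\<lambda>n. r powr (real n * (D - real k)) *
          prob_space.expectation Pr (\<lambda>\<omega>. intrinsic_volume k (Cset M (\<lambda>m i. X m i \<omega>) n)))
     \<longlonglongrightarrow>
       (intrinsic_volume k (cbox (0::real^'n) 1) *
          (real M ^ (d - k) * (1 - p)) / (real M ^ (d - k) * p - 1)
        + (\<Sum>T\<in>{T. T \<subseteq> grid_idx M 1 \<and> card T \<ge> 2}.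
             (-1) ^ (card T - 1) *
             (\<Sum>n. r powr (real (Suc n) * (D - real k)) *
                prob_space.expectation Pr (\<lambda>\<omega>. intrinsic_volume k
                  (\<Inter>jj\<in>T. Cset_sub M (\<lambda>m i. X m i \<omega>) (Suc n) jj)))))"
proof -
  interpret fp Pr X M p k by (rule fp.intro[OF P M2 p meas indep bern])
  have Mr: "real M \<ge> 2" using M2 by simp
  have p0: "0 < p" using p(1) Mr by (smt (verit) divide_pos_pos)
  define q where "q = intrinsic_volume k (cbox (0::real^'n) 1)"
  define a where "a = (\<lambda>n. expectation (\<lambda>\<omega>. intrinsic_volume k (Cset M (\<lambda>m i. X m i \<omega>) n :: (real^'n) set)))"
  define c where "c = (\<lambda>n T. expectation (\<lambda>\<omega>. intrinsic_volume k (\<Inter>jj\<in>T. Cset_sub M (\<lambda>m i. X m i \<omega>) n jj :: (real^'n) set)))"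
  define TT where "TT = {T. T \<subseteq> (grid_idx M 1 :: ('n \<Rightarrow> nat) set) \<and> 2 \<le> card T}"
  define \<rho> where "\<rho> = real M ^ k / (real M ^ d * p)"
  define B where "B = (\<lambda>n. \<Sum>T\<in>TT. (-1) ^ (card T + 1) * c n T)"
  define c0 where "c0 = real M ^ d * (1 / real M) ^ k * (1 - p) * q"
  have pw: "r powr (real n * (D - real k)) = \<rho> ^ n" for n
    unfolding \<rho>_def by (rule powr_rho[OF M2 p0]) (simp_all only: D_def r_def)
  have pwS: "r powr (real (Suc n) * (D - real k)) = \<rho> ^ Suc n" for n
    using pw[of "Suc n"] .
  have rho_pos: "0 < \<rho>" unfolding \<rho>_def using p0 Mr by simp
  have rho_lt: "\<rho> < 1"
  proof -
    have lnM: "ln (real M) > 0" using Mr by simp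
    have "real k * ln (real M) < D * ln (real M)" using k(2) lnM by simp
    also have "D * ln (real M) = ln (real M ^ d * p)" using lnM by (simp add: D_def)
    finally have "ln (real M ^ k) < ln (real M ^ d * p)" using Mr by (simp add: ln_realpow)
    then have "real M ^ k < real M ^ d * p" using Mr p0 by simp
    then show ?thesis unfolding \<rho>_def using Mr p0 by simp
  qed
  have rho_id: "\<rho> * real M ^ d * (1 / real M) ^ k * p = 1"
    unfolding \<rho>_def using p0 Mr by (simp add: field_simps)
  have rec: "a (Suc m) = real M ^ d * (1 / real M) ^ k * ((1 - p) * q + p * a m) + B (Suc m)" for m
  proof -
    have "a (Suc m) = (\<Sum>jj\<in>(grid_idx M 1 :: ('n \<Rightarrow> nat) set). (1 / real M) ^ k * ((1 - p) * q + p * a m)) + B (Suc m)"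
      unfolding a_def B_def c_def TT_def a_Suc using rec1 q_def by simp
    also have "\<dots> = real M ^ d * (1 / real M) ^ k * ((1 - p) * q + p * a m) + B (Suc m)"
      using card_grid_idx1[OF M1, where 'n='n] by (simp add: d_def)
    finally show ?thesis .
  qed
  have d1: "d \<ge> 1" unfolding d_def by simp
  have A_eq: "\<rho> ^ n * a n = (\<Sum>i<n. c0 * \<rho> ^ Suc i + \<rho> ^ Suc i * B (Suc i))" for n
  proof (induction n)
    case 0
    then show ?case using a0 by (simp add: a_def)
  next
    case (Suc m)
    have "\<rho> ^ Suc m * a (Suc m) = c0 * \<rho> ^ Suc m + (\<rho> * real M ^ d * (1 / real M) ^ k * p) * (\<rho> ^ m * a m)
        + \<rho> ^ Suc m * B (Suc m)"
      unfolding rec c0_def by (simp add: algebra_simps)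
    also have "\<dots> = c0 * \<rho> ^ Suc m + \<rho> ^ m * a m + \<rho> ^ Suc m * B (Suc m)" by (simp only: rho_id mult_1_left)
    finally show ?case using Suc.IH by simp
  qed
  define Kb where "Kb = real (card {S::'n set. card S = k} * (CARD('n) * M)) * 4 ^ (d - 1)"
  define z where "z = 1 / (real M * p)"
  have z: "0 \<le> z" "z < 1"
  proof -
    show "0 \<le> z" using Mr p0 by (simp add: z_def)
    have "1 < real M * p" using p(1) Mr by (simp add: field_simps)
    then show "z < 1" by (simp add: z_def)
  qed
  have bnd: "\<bar>\<rho> ^ n * c n T\<bar> \<le> Kb * z ^ n" if T: "T \<in> TT" for n T
  proof -
    have T': "T \<subseteq> grid_idx M 1" "2 \<le> card T" using T by (auto simp: TT_def)
    define F where "F = real (card {S::'n set. card S = k} * (CARD('n) * M)) * (1 / real M ^ n) ^ k"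
    have F0: "0 \<le> F" by (simp add: F_def)
    have bc: "\<bar>c n T\<bar> \<le> F * real ((2 * (M^n + 1)) ^ (CARD('n) - 1))"
      unfolding c_def F_def using bound_c[OF T', of n] by simp
    have Mn: "(1::real) \<le> real M ^ n" using Mr by simp
    have "real ((2 * (M^n + 1)) ^ (CARD('n) - 1)) \<le> (4 * real M ^ n) ^ (d - 1)"
    proof -
      have "real (2 * (M^n + 1)) \<le> 4 * real M ^ n" using Mn by simp
      then show ?thesis unfolding d_def of_nat_power by (rule power_mono) simp
    qed
    then have "F * real ((2 * (M^n + 1)) ^ (CARD('n) - 1)) \<le> F * (4 * real M ^ n) ^ (d - 1)"
      by (rule mult_left_mono[OF _ F0])
    then have bc2: "\<bar>c n T\<bar> \<le> F * (4 * real M ^ n) ^ (d - 1)"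
      using bc by linarith
    have e: "\<rho> * (1 / real M) ^ k * real M ^ (d - 1) = z"
    proof -
      have "real M ^ d = real M * real M ^ (d - 1)" using d1 by (metis power_eq_if not_one_le_zero)
      then show ?thesis unfolding \<rho>_def z_def using Mr p0 by (simp add: field_simps)
    qed
    have "\<rho> ^ n * ((1 / real M ^ n) ^ k * (4 * real M ^ n) ^ (d - 1)) = 4 ^ (d - 1) * (\<rho> * (1 / real M) ^ k * real M ^ (d - 1)) ^ n"
      by (simp add: power_mult_distrib power_divide power_mult[symmetric] mult.commute mult.left_commute)
    also have "\<dots> = 4 ^ (d - 1) * z ^ n" by (simp only: e)
    finally have e2: "\<rho> ^ n * ((1 / real M ^ n) ^ k * (4 * real M ^ n) ^ (d - 1)) = 4 ^ (d - 1) * z ^ n" .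
    have "\<bar>\<rho> ^ n * c n T\<bar> = \<rho> ^ n * \<bar>c n T\<bar>" using rho_pos by (simp add: abs_mult)
    also have "\<dots> \<le> \<rho> ^ n * (F * (4 * real M ^ n) ^ (d - 1))"
      using bc2 rho_pos by (intro mult_left_mono) simp_all
    also have "\<dots> = real (card {S::'n set. card S = k} * (CARD('n) * M)) * (\<rho> ^ n * ((1 / real M ^ n) ^ k * (4 * real M ^ n) ^ (d - 1)))"
      unfolding F_def by (simp only: mult_ac)
    also have "\<dots> = Kb * z ^ n" unfolding e2 Kb_def by simp
    finally show ?thesis .
  qed
  have summ: "summable (\<lambda>n. \<rho> ^ Suc n * c (Suc n) T)" if T: "T \<in> TT" for T
  proof (rule summable_comparison_test')
    show "summable (\<lambda>n. Kb * z ^ Suc n)" using z by (intro summable_mult summable_Suc_iff[THEN iffD2] summable_geometric) simp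
    show "norm (\<rho> ^ Suc n * c (Suc n) T) \<le> Kb * z ^ Suc n" for n using bnd[OF T, of "Suc n"] by (simp only: real_norm_def)
  qed
  define ST where "ST = (\<lambda>T. suminf (\<lambda>i. \<rho> ^ Suc i * c (Suc i) T))"
  define f where "f = (\<lambda>i. c0 * \<rho> ^ Suc i + (\<Sum>T\<in>TT. (-1) ^ (card T + 1) * (\<rho> ^ Suc i * c (Suc i) T)))"
  have fs: "f sums (c0 * (\<rho> * (1 / (1 - \<rho>))) + (\<Sum>T\<in>TT. (-1) ^ (card T + 1) * ST T))"
  proof -
    have g: "(\<lambda>i. \<rho> ^ i) sums (1 / (1 - \<rho>))" by (rule geometric_sums) (use rho_pos rho_lt in simp)
    have s1: "(\<lambda>i. c0 * (\<rho> * \<rho> ^ i)) sums (c0 * (\<rho> * (1 / (1 - \<rho>))))" by (intro sums_mult g)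
    have s2: "(\<lambda>i. \<Sum>T\<in>TT. (-1) ^ (card T + 1) * (\<rho> ^ Suc i * c (Suc i) T)) sums (\<Sum>T\<in>TT. (-1) ^ (card T + 1) * ST T)"
    proof (rule sums_sum)
      fix T assume "T \<in> TT"
      then have "(\<lambda>i. \<rho> ^ Suc i * c (Suc i) T) sums ST T" unfolding ST_def by (rule summable_sums[OF summ])
      then show "(\<lambda>i. (-1) ^ (card T + 1) * (\<rho> ^ Suc i * c (Suc i) T)) sums ((-1) ^ (card T + 1) * ST T)"
        by (rule sums_mult)
    qed
    show ?thesis unfolding f_def using sums_add[OF s1 s2] by simp
  qed
  have seq: "(\<lambda>n. r powr (real n * (D - real k)) * a n) = (\<lambda>n. \<Sum>i<n. f i)"
  proof
    fix n
    have "r powr (real n * (D - real k)) * a n = (\<Sum>i<n. c0 * \<rho> ^ Suc i + \<rho> ^ Suc i * B (Suc i))"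
      unfolding pw by (rule A_eq)
    also have "\<dots> = (\<Sum>i<n. f i)"
      unfolding f_def B_def by (intro sum.cong refl) (simp add: sum_distrib_left mult_ac)
    finally show "r powr (real n * (D - real k)) * a n = (\<Sum>i<n. f i)" .
  qed
  have lim: "(\<lambda>n. r powr (real n * (D - real k)) * a n) \<longlonglongrightarrow>
      (c0 * (\<rho> * (1 / (1 - \<rho>))) + (\<Sum>T\<in>TT. (-1) ^ (card T + 1) * ST T))"
    unfolding seq using fs by (simp add: sums_def)
  have val1: "c0 * (\<rho> * (1 / (1 - \<rho>))) = q * (real M ^ (d - k) * (1 - p)) / (real M ^ (d - k) * p - 1)"
  proof -
    have Md: "real M ^ d = real M ^ k * real M ^ (d - k)" using k(1) by (simp add: power_add[symmetric])
    have Mk: "real M ^ k > 0" using Mr by simp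
    have rq: "\<rho> = 1 / (real M ^ (d - k) * p)" unfolding \<rho>_def Md using Mk M2 by (simp add: field_simps)
    have Q: "real M ^ (d - k) * p > 1"
    proof -
      have "0 < real M ^ (d - k) * p" using Mr p0 by simp
      then show ?thesis using rho_lt rq by (simp add: field_simps)
    qed
    show ?thesis unfolding c0_def rq Md using Q Mk Mr p0 by (simp add: field_simps)
  qed
  have val2: "(\<Sum>T\<in>TT. (-1) ^ (card T + 1) * ST T) =
    (\<Sum>T\<in>{T. T \<subseteq> grid_idx M 1 \<and> card T \<ge> 2}. (-1) ^ (card T - 1) *
       (\<Sum>n. r powr (real (Suc n) * (D - real k)) *
          expectation (\<lambda>\<omega>. intrinsic_volume k (\<Inter>jj\<in>T. Cset_sub M (\<lambda>m i. X m i \<omega>) (Suc n) jj))))"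
    unfolding TT_def
  proof (intro sum.cong refl)
    fix T :: "('n \<Rightarrow> nat) set" assume T: "T \<in> {T. T \<subseteq> grid_idx M 1 \<and> 2 \<le> card T}"
    have "(-1::real) ^ (card T + 1) = (-1) ^ (card T - 1)"
    proof -
      have "card T + 1 = (card T - 1) + 2" using T by simp
      then have "(-1::real) ^ (card T + 1) = (-1) ^ (card T - 1) * (-1) ^ 2" by (metis power_add)
      then show ?thesis by simp
    qed
    then show "(-1) ^ (card T + 1) * ST T = (-1) ^ (card T - 1) *
       (\<Sum>n. r powr (real (Suc n) * (D - real k)) *
          expectation (\<lambda>\<omega>. intrinsic_volume k (\<Inter>jj\<in>T. Cset_sub M (\<lambda>m i. X m i \<omega>) (Suc n) jj)))"
      unfolding ST_def c_def pwS by simp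
  qed
  have conj1: "\<forall>T. T \<subseteq> grid_idx M 1 \<and> card T \<ge> 2 \<longrightarrow>
        summable (\<lambda>n. r powr (real (Suc n) * (D - real k)) *
          expectation (\<lambda>\<omega>. intrinsic_volume k
             (\<Inter>jj\<in>T. Cset_sub M (\<lambda>m i. X m i \<omega>) (Suc n) jj)))"
  proof (intro allI impI)
    fix T :: "('n \<Rightarrow> nat) set" assume "T \<subseteq> grid_idx M 1 \<and> card T \<ge> 2"
    then have "T \<in> TT" by (simp add: TT_def)
    from summ[OF this] show "summable (\<lambda>n. r powr (real (Suc n) * (D - real k)) *
          expectation (\<lambda>\<omega>. intrinsic_volume k
             (\<Inter>jj\<in>T. Cset_sub M (\<lambda>m i. X m i \<omega>) (Suc n) jj)))"
      unfolding c_def pwS .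
  qed
  show ?thesis
    using conj1 lim unfolding val1 val2 a_def q_def by simp
qed

end
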